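(* Let $k=\mathbb{F}_q$ ($q$ a power of 2) and let $k\subseteq K\subseteq\overline{k}$ be a finite extension. Let $C$ be an ordinary non-singular quartic plane curve defined over $K$. Then all bitangents of $C$ are defined over $K$ if and only if $C$ is $K$-isomorphic to $C_Q$ for some $Q\in\mathcal{Q}$ with coefficients in $K$.
   Context: A non-singular plane quartic is ordinary if its Jacobian has $2$-rank $3$ (equivalently, it has seven bitangents). $\mathcal{Q}$ is the set of quadratic forms $Q=ax^2+by^2+cz^2+dxy+eyz+fzx$ with coefficients in $\overline{k}$ satisfying $abc\neq0$, $a+b+d\neq0$, $b+c+e\neq0$, $a+c+f\neq0$, $a+b+c+d+e+f\neq1$, and $C_Q\subset\mathbb{P}^2$ is the curve $Q(x,y,z)^2=xyz(x+y+z)$. *)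

theory Defs
  imports "HOL-Computational_Algebra.Polynomial"
begin

definition char2 :: "'a::field itself \<Rightarrow> bool" where
  "char2 _ \<longleftrightarrow> (1::'a) + 1 = 0"

definition alg_closed :: "'a::field itself \<Rightarrow> bool" where
  "alg_closed _ \<longleftrightarrow> (\<forall>p::'a poly. degree p > 0 \<longrightarrow> (\<exists>x. poly p x = 0))"

definition is_subfield :: "'a::field set \<Rightarrow> bool" where
  "is_subfield K \<longleftrightarrow> 0 \<in> K \<and> 1 \<in> K \<and>
     (\<forall>x\<in>K. \<forall>y\<in>K. x + y \<in> K \<and> x * y \<in> K) \<and>
     (\<forall>x\<in>K. - x \<in> K) \<and> (\<forall>x\<in>K. x \<noteq> 0 \<longrightarrow> inverse x \<in> K)"

definition algebraic_over :: "'a::field set \<Rightarrow> bool" where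
  "algebraic_over K \<longleftrightarrow>
     (\<forall>x::'a. \<exists>p. p \<noteq> 0 \<and> (\<forall>i. coeff p i \<in> K) \<and> poly p x = 0)"

text \<open>Points of the affine cone over P^2 are triples. A ternary quartic form is given by
  coefficients c i j of the monomial x^i y^j z^(4-i-j), for i + j <= 4.\<close>

type_synonym 'a pt = "'a \<times> 'a \<times> 'a"

definition qmonos :: "(nat \<times> nat) set" where
  "qmonos = {(i, j). i + j \<le> 4}"

definition qeval :: "(nat \<Rightarrow> nat \<Rightarrow> 'a::comm_ring_1) \<Rightarrow> 'a pt \<Rightarrow> 'a" where
  "qeval c p = (case p of (x, y, z) \<Rightarrow>
     (\<Sum>(i, j)\<in>qmonos. c i j * x ^ i * y ^ j * z ^ (4 - i - j)))"

definition qdx :: "(nat \<Rightarrow> nat \<Rightarrow> 'a::comm_ring_1) \<Rightarrow> 'a pt \<Rightarrow> 'a" where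
  "qdx c p = (case p of (x, y, z) \<Rightarrow>
     (\<Sum>(i, j)\<in>qmonos. of_nat i * c i j * x ^ (i - 1) * y ^ j * z ^ (4 - i - j)))"

definition qdy :: "(nat \<Rightarrow> nat \<Rightarrow> 'a::comm_ring_1) \<Rightarrow> 'a pt \<Rightarrow> 'a" where
  "qdy c p = (case p of (x, y, z) \<Rightarrow>
     (\<Sum>(i, j)\<in>qmonos. of_nat j * c i j * x ^ i * y ^ (j - 1) * z ^ (4 - i - j)))"

definition qdz :: "(nat \<Rightarrow> nat \<Rightarrow> 'a::comm_ring_1) \<Rightarrow> 'a pt \<Rightarrow> 'a" where
  "qdz c p = (case p of (x, y, z) \<Rightarrow>
     (\<Sum>(i, j)\<in>qmonos. of_nat (4 - i - j) * c i j * x ^ i * y ^ j * z ^ (4 - i - j - 1)))"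

definition nonsingular_quartic :: "(nat \<Rightarrow> nat \<Rightarrow> 'a::comm_ring_1) \<Rightarrow> bool" where
  "nonsingular_quartic c \<longleftrightarrow>
     (\<forall>p. p \<noteq> (0, 0, 0) \<longrightarrow>
        \<not> (qeval c p = 0 \<and> qdx c p = 0 \<and> qdy c p = 0 \<and> qdz c p = 0))"

definition pt_add :: "'a::comm_ring_1 pt \<Rightarrow> 'a pt \<Rightarrow> 'a pt" where
  "pt_add p r = (case p of (x, y, z) \<Rightarrow> case r of (u, v, w) \<Rightarrow> (x + u, y + v, z + w))"

definition pt_scale :: "'a::comm_ring_1 \<Rightarrow> 'a pt \<Rightarrow> 'a pt" where
  "pt_scale s p = (case p of (x, y, z) \<Rightarrow> (s * x, s * y, s * z))"

definition cross :: "'a::comm_ring_1 pt \<Rightarrow> 'a pt \<Rightarrow> 'a pt" where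
  "cross p r = (case p of (x, y, z) \<Rightarrow> case r of (u, v, w) \<Rightarrow>
      (y * w - z * v, z * u - x * w, x * v - y * u))"

definition line_set :: "'a::comm_ring_1 pt \<Rightarrow> 'a pt set" where
  "line_set v = (case v of (a, b, d) \<Rightarrow> {(x, y, z). a * x + b * y + d * z = 0})"

text \<open>A line is a bitangent if the restriction of the quartic to it (parametrised by a basis
  P, R of the line) is the square of a nonzero binary quadratic form, i.e. the intersection
  divisor of the line with the curve is of the form 2D.\<close>
definition is_bitangent :: "(nat \<Rightarrow> nat \<Rightarrow> 'a::comm_ring_1) \<Rightarrow> 'a pt \<Rightarrow> bool" where
  "is_bitangent c v \<longleftrightarrow> v \<noteq> (0, 0, 0) \<and>
     (\<exists>P R. P \<in> line_set v \<and> R \<in> line_set v \<and> cross P R \<noteq> (0, 0, 0) \<and>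
        (\<exists>g0 g1 g2. (g0, g1, g2) \<noteq> (0, 0, 0) \<and>
           (\<forall>s t. qeval c (pt_add (pt_scale s P) (pt_scale t R))
                    = (g0 * s ^ 2 + g1 * s * t + g2 * t ^ 2) ^ 2)))"

definition bitangents :: "(nat \<Rightarrow> nat \<Rightarrow> 'a::comm_ring_1) \<Rightarrow> 'a pt set set" where
  "bitangents c = {line_set v | v. is_bitangent c v}"

definition line_over :: "'a::comm_ring_1 set \<Rightarrow> 'a pt set \<Rightarrow> bool" where
  "line_over K L \<longleftrightarrow> (\<exists>a b d. (a, b, d) \<noteq> (0, 0, 0) \<and> a \<in> K \<and> b \<in> K \<and> d \<in> K \<and>
                          L = line_set (a, b, d))"

definition ordinary_quartic :: "(nat \<Rightarrow> nat \<Rightarrow> 'a::comm_ring_1) \<Rightarrow> bool" where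
  "ordinary_quartic c \<longleftrightarrow> finite (bitangents c) \<and> card (bitangents c) = 7"

definition in_QQ :: "'a::field \<Rightarrow> 'a \<Rightarrow> 'a \<Rightarrow> 'a \<Rightarrow> 'a \<Rightarrow> 'a \<Rightarrow> bool" where
  "in_QQ a b cc d e f \<longleftrightarrow> a * b * cc \<noteq> 0 \<and> a + b + d \<noteq> 0 \<and> b + cc + e \<noteq> 0 \<and>
     a + cc + f \<noteq> 0 \<and> a + b + cc + d + e + f \<noteq> 1"

definition CQ :: "'a::comm_ring_1 \<Rightarrow> 'a \<Rightarrow> 'a \<Rightarrow> 'a \<Rightarrow> 'a \<Rightarrow> 'a \<Rightarrow> 'a pt \<Rightarrow> 'a" where
  "CQ a b cc d e f p = (case p of (x, y, z) \<Rightarrow>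
     (a * x ^ 2 + b * y ^ 2 + cc * z ^ 2 + d * x * y + e * y * z + f * z * x) ^ 2
       - x * y * z * (x + y + z))"

definition lin :: "(nat \<Rightarrow> nat \<Rightarrow> 'a::comm_ring_1) \<Rightarrow> 'a pt \<Rightarrow> 'a pt" where
  "lin M p = (case p of (x, y, z) \<Rightarrow>
     (M 0 0 * x + M 0 1 * y + M 0 2 * z,
      M 1 0 * x + M 1 1 * y + M 1 2 * z,
      M 2 0 * x + M 2 1 * y + M 2 2 * z))"

definition det3 :: "(nat \<Rightarrow> nat \<Rightarrow> 'a::comm_ring_1) \<Rightarrow> 'a" where
  "det3 M = M 0 0 * (M 1 1 * M 2 2 - M 1 2 * M 2 1)
          - M 0 1 * (M 1 0 * M 2 2 - M 1 2 * M 2 0)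
          + M 0 2 * (M 1 0 * M 2 1 - M 1 1 * M 2 0)"

definition K_iso :: "'a::field set \<Rightarrow> (nat \<Rightarrow> nat \<Rightarrow> 'a) \<Rightarrow> ('a pt \<Rightarrow> 'a) \<Rightarrow> bool" where
  "K_iso K c G \<longleftrightarrow> (\<exists>M lam. (\<forall>i<3. \<forall>j<3. M i j \<in> K) \<and> det3 M \<noteq> 0 \<and> lam \<in> K \<and> lam \<noteq> 0 \<and>
      (\<forall>p. qeval c (lin M p) = lam * G p))"

end

theory Submission
  imports Defs
begin

lemma qmonos_Sigma: "qmonos = Sigma {..4::nat} (\<lambda>i. {..4-i})"
  by (auto simp: qmonos_def)

lemma qsum_expl: "(\<Sum>(i,j)\<in>qmonos. f i j) = f 0 0 + f 0 1 + f 0 2 + f 0 3 + f 0 4 + f 1 0 + f 1 1 + f 1 2 + f 1 3 + f 2 0 + f 2 1 + f 2 2 + f 3 0 + f 3 1 + (f 4 0 :: 'a::comm_monoid_add)"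
proof -
  have "(\<Sum>(i,j)\<in>qmonos. f i j) = (\<Sum>i\<le>4. \<Sum>j\<le>4-i. f i j)"
    unfolding qmonos_Sigma by (subst sum.Sigma) auto
  also have "\<dots> = f 0 0 + f 0 1 + f 0 2 + f 0 3 + f 0 4 + f 1 0 + f 1 1 + f 1 2 + f 1 3 + f 2 0 + f 2 1 + f 2 2 + f 3 0 + f 3 1 + (f 4 0 :: 'a::comm_monoid_add)"
    by (simp add: numeral_eq_Suc atMost_Suc ac_simps)
  finally show ?thesis .
qed

lemma qeval_expl: "qeval c (x,y,z) = c 0 0 * z^4 + c 0 1 * y * z^3 + c 0 2 * y^2 * z^2 + c 0 3 * y^3 * z + c 0 4 * y^4
  + c 1 0 * x * z^3 + c 1 1 * x * y * z^2 + c 1 2 * x * y^2 * z + c 1 3 * x * y^3 + c 2 0 * x^2 * z^2 + c 2 1 * x^2*y*z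
  + c 2 2 * x^2*y^2 + c 3 0 * x^3 * z + c 3 1 * x^3 * y + c 4 0 * x^4"
  unfolding qeval_def by (simp add: qsum_expl)

lemma qdx_expl: "qdx c (x,y,z) = c 1 0 * z^3 + c 1 1 * y * z^2 + c 1 2 * y^2 * z + c 1 3 * y^3 + 2 * c 2 0 * x * z^2 + 2 * c 2 1 * x*y*z
  + 2 * c 2 2 * x*y^2 + 3 * c 3 0 * x^2 * z + 3 * c 3 1 * x^2 * y + 4 * c 4 0 * x^3"
  unfolding qdx_def by (simp add: qsum_expl)

lemma qdy_expl: "qdy c (x,y,z) = c 0 1 * z^3 + 2 * c 0 2 * y * z^2 + 3 * c 0 3 * y^2 * z + 4 * c 0 4 * y^3
  + c 1 1 * x * z^2 + 2 * c 1 2 * x * y * z + 3 * c 1 3 * x * y^2 + c 2 1 * x^2*z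
  + 2 * c 2 2 * x^2*y + c 3 1 * x^3"
  unfolding qdy_def by (simp add: qsum_expl)

lemma qdz_expl: "qdz c (x,y,z) = 4 * c 0 0 * z^3 + 3 * c 0 1 * y * z^2 + 2 * c 0 2 * y^2 * z + c 0 3 * y^3
  + 3 * c 1 0 * x * z^2 + 2 * c 1 1 * x * y * z + c 1 2 * x * y^2 + 2 * c 2 0 * x^2 * z + c 2 1 * x^2*y
  + c 3 0 * x^3"
  unfolding qdz_def by (simp add: qsum_expl)

definition Dd :: "(nat \<Rightarrow> nat \<Rightarrow> 'a::comm_ring_1) \<Rightarrow> 'a pt \<Rightarrow> 'a pt \<Rightarrow> 'a" where
  "Dd c p r = (case r of (u,v,w) \<Rightarrow> u * qdx c p + v * qdy c p + w * qdz c p)"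

definition EE :: "(nat \<Rightarrow> nat \<Rightarrow> 'a::comm_ring_1) \<Rightarrow> 'a pt \<Rightarrow> 'a pt \<Rightarrow> 'a" where
  "EE c p r = qeval c (pt_add p r) - qeval c p - Dd c p r - Dd c r p - qeval c r"

lemma taylor: fixes c :: "nat \<Rightarrow> nat \<Rightarrow> 'a::field" shows "qeval c (pt_add (x,y,z) (pt_scale t (u,v,w))) = qeval c (x,y,z) + t * Dd c (x,y,z) (u,v,w) + t^2 * EE c (x,y,z) (u,v,w) + t^3 * Dd c (u,v,w) (x,y,z) + t^4 * qeval c (u,v,w)"
  unfolding EE_def Dd_def pt_add_def pt_scale_def prod.case qeval_expl qdx_expl qdy_expl qdz_expl
  by algebra

definition comp :: "(nat \<Rightarrow> nat \<Rightarrow> 'a::comm_ring_1) \<Rightarrow> (nat \<Rightarrow> nat \<Rightarrow> 'a) \<Rightarrow> nat \<Rightarrow> nat \<Rightarrow> 'a" where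
  "comp c M i j = (if i = 0 \<and> j = 0 then c 0 0 * (M 2 2)^4 + c 0 1 * M 1 2 * (M 2 2)^3 + c 0 2 * (M 1 2)^2 * (M 2 2)^2 + c 0 3 * (M 1 2)^3 * M 2 2 + c 0 4 * (M 1 2)^4 + c 1 0 * M 0 2 * (M 2 2)^3 + c 1 1 * M 0 2 * M 1 2 * (M 2 2)^2 + c 1 2 * M 0 2 * (M 1 2)^2 * M 2 2 + c 1 3 * M 0 2 * (M 1 2)^3 + c 2 0 * (M 0 2)^2 * (M 2 2)^2 + c 2 1 * (M 0 2)^2 * M 1 2 * M 2 2 + c 2 2 * (M 0 2)^2 * (M 1 2)^2 + c 3 0 * (M 0 2)^3 * M 2 2 + c 3 1 * (M 0 2)^3 * M 1 2 + c 4 0 * (M 0 2)^4 else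
    if i = 0 \<and> j = 1 then 4 * c 0 0 * M 2 1 * (M 2 2)^3 + c 0 1 * M 1 1 * (M 2 2)^3 + 3 * c 0 1 * M 1 2 * M 2 1 * (M 2 2)^2 + 2 * c 0 2 * M 1 1 * M 1 2 * (M 2 2)^2 + 2 * c 0 2 * (M 1 2)^2 * M 2 1 * M 2 2 + 3 * c 0 3 * M 1 1 * (M 1 2)^2 * M 2 2 + c 0 3 * (M 1 2)^3 * M 2 1 + 4 * c 0 4 * M 1 1 * (M 1 2)^3 + c 1 0 * M 0 1 * (M 2 2)^3 + 3 * c 1 0 * M 0 2 * M 2 1 * (M 2 2)^2 + c 1 1 * M 0 1 * M 1 2 * (M 2 2)^2 + c 1 1 * M 0 2 * M 1 1 * (M 2 2)^2 + 2 * c 1 1 * M 0 2 * M 1 2 * M 2 1 * M 2 2 + c 1 2 * M 0 1 * (M 1 2)^2 * M 2 2 + 2 * c 1 2 * M 0 2 * M 1 1 * M 1 2 * M 2 2 + c 1 2 * M 0 2 * (M 1 2)^2 * M 2 1 + c 1 3 * M 0 1 * (M 1 2)^3 + 3 * c 1 3 * M 0 2 * M 1 1 * (M 1 2)^2 + 2 * c 2 0 * M 0 1 * M 0 2 * (M 2 2)^2 + 2 * c 2 0 * (M 0 2)^2 * M 2 1 * M 2 2 + 2 * c 2 1 * M 0 1 * M 0 2 * M 1 2 * M 2 2 + c 2 1 * (M 0 2)^2 * M 1 1 * M 2 2 + c 2 1 * (M 0 2)^2 * M 1 2 * M 2 1 + 2 * c 2 2 * M 0 1 * M 0 2 * (M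 1 2)^2 + 2 * c 2 2 * (M 0 2)^2 * M 1 1 * M 1 2 + 3 * c 3 0 * M 0 1 * (M 0 2)^2 * M 2 2 + c 3 0 * (M 0 2)^3 * M 2 1 + 3 * c 3 1 * M 0 1 * (M 0 2)^2 * M 1 2 + c 3 1 * (M 0 2)^3 * M 1 1 + 4 * c 4 0 * M 0 1 * (M 0 2)^3 else
    if i = 0 \<and> j = 2 then 6 * c 0 0 * (M 2 1)^2 * (M 2 2)^2 + 3 * c 0 1 * M 1 1 * M 2 1 * (M 2 2)^2 + 3 * c 0 1 * M 1 2 * (M 2 1)^2 * M 2 2 + c 0 2 * (M 1 1)^2 * (M 2 2)^2 + 4 * c 0 2 * M 1 1 * M 1 2 * M 2 1 * M 2 2 + c 0 2 * (M 1 2)^2 * (M 2 1)^2 + 3 * c 0 3 * (M 1 1)^2 * M 1 2 * M 2 2 + 3 * c 0 3 * M 1 1 * (M 1 2)^2 * M 2 1 + 6 * c 0 4 * (M 1 1)^2 * (M 1 2)^2 + 3 * c 1 0 * M 0 1 * M 2 1 * (M 2 2)^2 + 3 * c 1 0 * M 0 2 * (M 2 1)^2 * M 2 2 + c 1 1 * M 0 1 * M 1 1 * (M 2 2)^2 + 2 * c 1 1 * M 0 1 * M 1 2 * M 2 1 * M 2 2 + 2 * c 1 1 * M 0 2 * M 1 1 * M 2 1 * M 2 2 + c 1 1 * M 0 2 * M 1 2 * (M 2 1)^2 + 2 * c 1 2 * M 0 1 * M 1 1 * M 1 2 * M 2 2 + c 1 2 * M 0 1 * (M 1 2)^2 * M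 2 1 + c 1 2 * M 0 2 * (M 1 1)^2 * M 2 2 + 2 * c 1 2 * M 0 2 * M 1 1 * M 1 2 * M 2 1 + 3 * c 1 3 * M 0 1 * M 1 1 * (M 1 2)^2 + 3 * c 1 3 * M 0 2 * (M 1 1)^2 * M 1 2 + c 2 0 * (M 0 1)^2 * (M 2 2)^2 + 4 * c 2 0 * M 0 1 * M 0 2 * M 2 1 * M 2 2 + c 2 0 * (M 0 2)^2 * (M 2 1)^2 + c 2 1 * (M 0 1)^2 * M 1 2 * M 2 2 + 2 * c 2 1 * M 0 1 * M 0 2 * M 1 1 * M 2 2 + 2 * c 2 1 * M 0 1 * M 0 2 * M 1 2 * M 2 1 + c 2 1 * (M 0 2)^2 * M 1 1 * M 2 1 + c 2 2 * (M 0 1)^2 * (M 1 2)^2 + 4 * c 2 2 * M 0 1 * M 0 2 * M 1 1 * M 1 2 + c 2 2 * (M 0 2)^2 * (M 1 1)^2 + 3 * c 3 0 * (M 0 1)^2 * M 0 2 * M 2 2 + 3 * c 3 0 * M 0 1 * (M 0 2)^2 * M 2 1 + 3 * c 3 1 * (M 0 1)^2 * M 0 2 * M 1 2 + 3 * c 3 1 * M 0 1 * (M 0 2)^2 * M 1 1 + 6 * c 4 0 * (M 0 1)^2 * (M 0 2)^2 else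
    if i = 0 \<and> j = 3 then 4 * c 0 0 * (M 2 1)^3 * M 2 2 + 3 * c 0 1 * M 1 1 * (M 2 1)^2 * M 2 2 + c 0 1 * M 1 2 * (M 2 1)^3 + 2 * c 0 2 * (M 1 1)^2 * M 2 1 * M 2 2 + 2 * c 0 2 * M 1 1 * M 1 2 * (M 2 1)^2 + c 0 3 * (M 1 1)^3 * M 2 2 + 3 * c 0 3 * (M 1 1)^2 * M 1 2 * M 2 1 + 4 * c 0 4 * (M 1 1)^3 * M 1 2 + 3 * c 1 0 * M 0 1 * (M 2 1)^2 * M 2 2 + c 1 0 * M 0 2 * (M 2 1)^3 + 2 * c 1 1 * M 0 1 * M 1 1 * M 2 1 * M 2 2 + c 1 1 * M 0 1 * M 1 2 * (M 2 1)^2 + c 1 1 * M 0 2 * M 1 1 * (M 2 1)^2 + c 1 2 * M 0 1 * (M 1 1)^2 * M 2 2 + 2 * c 1 2 * M 0 1 * M 1 1 * M 1 2 * M 2 1 + c 1 2 * M 0 2 * (M 1 1)^2 * M 2 1 + 3 * c 1 3 * M 0 1 * (M 1 1)^2 * M 1 2 + c 1 3 * M 0 2 * (M 1 1)^3 + 2 * c 2 0 * (M 0 1)^2 * M 2 1 * M 2 2 + 2 * c 2 0 * M 0 1 * M 0 2 * (M 2 1)^2 + c 2 1 * (M 0 1)^2 * M 1 1 * M 2 2 + c 2 1 * (M 0 1)^2 * M 1 2 * M 2 1 + 2 * c 2 1 * M 0 1 * M 0 2 * M 1 1 * M 2 1 + 2 * c 2 2 * (M 0 1)^2 * M 1 1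 * M 1 2 + 2 * c 2 2 * M 0 1 * M 0 2 * (M 1 1)^2 + c 3 0 * (M 0 1)^3 * M 2 2 + 3 * c 3 0 * (M 0 1)^2 * M 0 2 * M 2 1 + c 3 1 * (M 0 1)^3 * M 1 2 + 3 * c 3 1 * (M 0 1)^2 * M 0 2 * M 1 1 + 4 * c 4 0 * (M 0 1)^3 * M 0 2 else
    if i = 0 \<and> j = 4 then c 0 0 * (M 2 1)^4 + c 0 1 * M 1 1 * (M 2 1)^3 + c 0 2 * (M 1 1)^2 * (M 2 1)^2 + c 0 3 * (M 1 1)^3 * M 2 1 + c 0 4 * (M 1 1)^4 + c 1 0 * M 0 1 * (M 2 1)^3 + c 1 1 * M 0 1 * M 1 1 * (M 2 1)^2 + c 1 2 * M 0 1 * (M 1 1)^2 * M 2 1 + c 1 3 * M 0 1 * (M 1 1)^3 + c 2 0 * (M 0 1)^2 * (M 2 1)^2 + c 2 1 * (M 0 1)^2 * M 1 1 * M 2 1 + c 2 2 * (M 0 1)^2 * (M 1 1)^2 + c 3 0 * (M 0 1)^3 * M 2 1 + c 3 1 * (M 0 1)^3 * M 1 1 + c 4 0 * (M 0 1)^4 else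
    if i = 1 \<and> j = 0 then 4 * c 0 0 * M 2 0 * (M 2 2)^3 + c 0 1 * M 1 0 * (M 2 2)^3 + 3 * c 0 1 * M 1 2 * M 2 0 * (M 2 2)^2 + 2 * c 0 2 * M 1 0 * M 1 2 * (M 2 2)^2 + 2 * c 0 2 * (M 1 2)^2 * M 2 0 * M 2 2 + 3 * c 0 3 * M 1 0 * (M 1 2)^2 * M 2 2 + c 0 3 * (M 1 2)^3 * M 2 0 + 4 * c 0 4 * M 1 0 * (M 1 2)^3 + c 1 0 * M 0 0 * (M 2 2)^3 + 3 * c 1 0 * M 0 2 * M 2 0 * (M 2 2)^2 + c 1 1 * M 0 0 * M 1 2 * (M 2 2)^2 + c 1 1 * M 0 2 * M 1 0 * (M 2 2)^2 + 2 * c 1 1 * M 0 2 * M 1 2 * M 2 0 * M 2 2 + c 1 2 * M 0 0 * (M 1 2)^2 * M 2 2 + 2 * c 1 2 * M 0 2 * M 1 0 * M 1 2 * M 2 2 + c 1 2 * M 0 2 * (M 1 2)^2 * M 2 0 + c 1 3 * M 0 0 * (M 1 2)^3 + 3 * c 1 3 * M 0 2 * M 1 0 * (M 1 2)^2 + 2 * c 2 0 * M 0 0 * M 0 2 * (M 2 2)^2 + 2 * c 2 0 * (M 0 2)^2 * M 2 0 * M 2 2 + 2 * c 2 1 * M 0 0 * M 0 2 * M 1 2 * M 2 2 + c 2 1 * (M 0 2)^2 * M 1 0 * M 2 2 + c 2 1 * (M 0 2)^2 * M 1 2 * M 2 0 + 2 * c 2 2 * M 0 0 * M 0 2 * (M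 1 2)^2 + 2 * c 2 2 * (M 0 2)^2 * M 1 0 * M 1 2 + 3 * c 3 0 * M 0 0 * (M 0 2)^2 * M 2 2 + c 3 0 * (M 0 2)^3 * M 2 0 + 3 * c 3 1 * M 0 0 * (M 0 2)^2 * M 1 2 + c 3 1 * (M 0 2)^3 * M 1 0 + 4 * c 4 0 * M 0 0 * (M 0 2)^3 else
    if i = 1 \<and> j = 1 then 12 * c 0 0 * M 2 0 * M 2 1 * (M 2 2)^2 + 3 * c 0 1 * M 1 0 * M 2 1 * (M 2 2)^2 + 3 * c 0 1 * M 1 1 * M 2 0 * (M 2 2)^2 + 6 * c 0 1 * M 1 2 * M 2 0 * M 2 1 * M 2 2 + 2 * c 0 2 * M 1 0 * M 1 1 * (M 2 2)^2 + 4 * c 0 2 * M 1 0 * M 1 2 * M 2 1 * M 2 2 + 4 * c 0 2 * M 1 1 * M 1 2 * M 2 0 * M 2 2 + 2 * c 0 2 * (M 1 2)^2 * M 2 0 * M 2 1 + 6 * c 0 3 * M 1 0 * M 1 1 * M 1 2 * M 2 2 + 3 * c 0 3 * M 1 0 * (M 1 2)^2 * M 2 1 + 3 * c 0 3 * M 1 1 * (M 1 2)^2 * M 2 0 + 12 * c 0 4 * M 1 0 * M 1 1 * (M 1 2)^2 + 3 * c 1 0 * M 0 0 * M 2 1 * (M 2 2)^2 + 3 * c 1 0 * M 0 1 * M 2 0 * (M 2 2)^2 + 6 * c 1 0 * M 0 2 * M 2 0 * M 2 1 * M 2 2 + c 1 1 * M 0 0 * M 1 1 * (M 2 2)^2 +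 2 * c 1 1 * M 0 0 * M 1 2 * M 2 1 * M 2 2 + c 1 1 * M 0 1 * M 1 0 * (M 2 2)^2 + 2 * c 1 1 * M 0 1 * M 1 2 * M 2 0 * M 2 2 + 2 * c 1 1 * M 0 2 * M 1 0 * M 2 1 * M 2 2 + 2 * c 1 1 * M 0 2 * M 1 1 * M 2 0 * M 2 2 + 2 * c 1 1 * M 0 2 * M 1 2 * M 2 0 * M 2 1 + 2 * c 1 2 * M 0 0 * M 1 1 * M 1 2 * M 2 2 + c 1 2 * M 0 0 * (M 1 2)^2 * M 2 1 + 2 * c 1 2 * M 0 1 * M 1 0 * M 1 2 * M 2 2 + c 1 2 * M 0 1 * (M 1 2)^2 * M 2 0 + 2 * c 1 2 * M 0 2 * M 1 0 * M 1 1 * M 2 2 + 2 * c 1 2 * M 0 2 * M 1 0 * M 1 2 * M 2 1 + 2 * c 1 2 * M 0 2 * M 1 1 * M 1 2 * M 2 0 + 3 * c 1 3 * M 0 0 * M 1 1 * (M 1 2)^2 + 3 * c 1 3 * M 0 1 * M 1 0 * (M 1 2)^2 + 6 * c 1 3 * M 0 2 * M 1 0 * M 1 1 * M 1 2 + 2 * c 2 0 * M 0 0 * M 0 1 * (M 2 2)^2 + 4 * c 2 0 * M 0 0 * M 0 2 * M 2 1 * M 2 2 + 4 * c 2 0 * M 0 1 * M 0 2 * M 2 0 * M 2 2 + 2 * c 2 0 * (M 0 2)^2 * M 2 0 * M 2 1 + 2 * c 2 1 * M 0 0 * M 0 1 * M 1 2 * M 2 2 + 2 * c 2 1 * M 0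 0 * M 0 2 * M 1 1 * M 2 2 + 2 * c 2 1 * M 0 0 * M 0 2 * M 1 2 * M 2 1 + 2 * c 2 1 * M 0 1 * M 0 2 * M 1 0 * M 2 2 + 2 * c 2 1 * M 0 1 * M 0 2 * M 1 2 * M 2 0 + c 2 1 * (M 0 2)^2 * M 1 0 * M 2 1 + c 2 1 * (M 0 2)^2 * M 1 1 * M 2 0 + 2 * c 2 2 * M 0 0 * M 0 1 * (M 1 2)^2 + 4 * c 2 2 * M 0 0 * M 0 2 * M 1 1 * M 1 2 + 4 * c 2 2 * M 0 1 * M 0 2 * M 1 0 * M 1 2 + 2 * c 2 2 * (M 0 2)^2 * M 1 0 * M 1 1 + 6 * c 3 0 * M 0 0 * M 0 1 * M 0 2 * M 2 2 + 3 * c 3 0 * M 0 0 * (M 0 2)^2 * M 2 1 + 3 * c 3 0 * M 0 1 * (M 0 2)^2 * M 2 0 + 6 * c 3 1 * M 0 0 * M 0 1 * M 0 2 * M 1 2 + 3 * c 3 1 * M 0 0 * (M 0 2)^2 * M 1 1 + 3 * c 3 1 * M 0 1 * (M 0 2)^2 * M 1 0 + 12 * c 4 0 * M 0 0 * M 0 1 * (M 0 2)^2 else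
    if i = 1 \<and> j = 2 then 12 * c 0 0 * M 2 0 * (M 2 1)^2 * M 2 2 + 3 * c 0 1 * M 1 0 * (M 2 1)^2 * M 2 2 + 6 * c 0 1 * M 1 1 * M 2 0 * M 2 1 * M 2 2 + 3 * c 0 1 * M 1 2 * M 2 0 * (M 2 1)^2 + 4 * c 0 2 * M 1 0 * M 1 1 * M 2 1 * M 2 2 + 2 * c 0 2 * M 1 0 * M 1 2 * (M 2 1)^2 + 2 * c 0 2 * (M 1 1)^2 * M 2 0 * M 2 2 + 4 * c 0 2 * M 1 1 * M 1 2 * M 2 0 * M 2 1 + 3 * c 0 3 * M 1 0 * (M 1 1)^2 * M 2 2 + 6 * c 0 3 * M 1 0 * M 1 1 * M 1 2 * M 2 1 + 3 * c 0 3 * (M 1 1)^2 * M 1 2 * M 2 0 + 12 * c 0 4 * M 1 0 * (M 1 1)^2 * M 1 2 + 3 * c 1 0 * M 0 0 * (M 2 1)^2 * M 2 2 + 6 * c 1 0 * M 0 1 * M 2 0 * M 2 1 * M 2 2 + 3 * c 1 0 * M 0 2 * M 2 0 * (M 2 1)^2 + 2 * c 1 1 * M 0 0 * M 1 1 * M 2 1 * M 2 2 + c 1 1 * M 0 0 * M 1 2 * (M 2 1)^2 + 2 * c 1 1 * M 0 1 * M 1 0 * M 2 1 * M 2 2 + 2 * c 1 1 * M 0 1 * M 1 1 * M 2 0 * M 2 2 + 2 * c 1 1 * M 0 1 * M 1 2 * M 2 0 * M 2 1 + c 1 1 * M 0 2 * M 1 0 * (M 2 1)^2 + 2 * c 1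 1 * M 0 2 * M 1 1 * M 2 0 * M 2 1 + c 1 2 * M 0 0 * (M 1 1)^2 * M 2 2 + 2 * c 1 2 * M 0 0 * M 1 1 * M 1 2 * M 2 1 + 2 * c 1 2 * M 0 1 * M 1 0 * M 1 1 * M 2 2 + 2 * c 1 2 * M 0 1 * M 1 0 * M 1 2 * M 2 1 + 2 * c 1 2 * M 0 1 * M 1 1 * M 1 2 * M 2 0 + 2 * c 1 2 * M 0 2 * M 1 0 * M 1 1 * M 2 1 + c 1 2 * M 0 2 * (M 1 1)^2 * M 2 0 + 3 * c 1 3 * M 0 0 * (M 1 1)^2 * M 1 2 + 6 * c 1 3 * M 0 1 * M 1 0 * M 1 1 * M 1 2 + 3 * c 1 3 * M 0 2 * M 1 0 * (M 1 1)^2 + 4 * c 2 0 * M 0 0 * M 0 1 * M 2 1 * M 2 2 + 2 * c 2 0 * M 0 0 * M 0 2 * (M 2 1)^2 + 2 * c 2 0 * (M 0 1)^2 * M 2 0 * M 2 2 + 4 * c 2 0 * M 0 1 * M 0 2 * M 2 0 * M 2 1 + 2 * c 2 1 * M 0 0 * M 0 1 * M 1 1 * M 2 2 + 2 * c 2 1 * M 0 0 * M 0 1 * M 1 2 * M 2 1 + 2 * c 2 1 * M 0 0 * M 0 2 * M 1 1 * M 2 1 + c 2 1 * (M 0 1)^2 * M 1 0 * M 2 2 + c 2 1 * (M 0 1)^2 * M 1 2 * M 2 0 + 2 * c 2 1 * M 0 1 * M 0 2 * M 1 0 * M 2 1 + 2 * c 2 1 * M 0 1 * M 0 2 * M 1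 1 * M 2 0 + 4 * c 2 2 * M 0 0 * M 0 1 * M 1 1 * M 1 2 + 2 * c 2 2 * M 0 0 * M 0 2 * (M 1 1)^2 + 2 * c 2 2 * (M 0 1)^2 * M 1 0 * M 1 2 + 4 * c 2 2 * M 0 1 * M 0 2 * M 1 0 * M 1 1 + 3 * c 3 0 * M 0 0 * (M 0 1)^2 * M 2 2 + 6 * c 3 0 * M 0 0 * M 0 1 * M 0 2 * M 2 1 + 3 * c 3 0 * (M 0 1)^2 * M 0 2 * M 2 0 + 3 * c 3 1 * M 0 0 * (M 0 1)^2 * M 1 2 + 6 * c 3 1 * M 0 0 * M 0 1 * M 0 2 * M 1 1 + 3 * c 3 1 * (M 0 1)^2 * M 0 2 * M 1 0 + 12 * c 4 0 * M 0 0 * (M 0 1)^2 * M 0 2 else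
    if i = 1 \<and> j = 3 then 4 * c 0 0 * M 2 0 * (M 2 1)^3 + c 0 1 * M 1 0 * (M 2 1)^3 + 3 * c 0 1 * M 1 1 * M 2 0 * (M 2 1)^2 + 2 * c 0 2 * M 1 0 * M 1 1 * (M 2 1)^2 + 2 * c 0 2 * (M 1 1)^2 * M 2 0 * M 2 1 + 3 * c 0 3 * M 1 0 * (M 1 1)^2 * M 2 1 + c 0 3 * (M 1 1)^3 * M 2 0 + 4 * c 0 4 * M 1 0 * (M 1 1)^3 + c 1 0 * M 0 0 * (M 2 1)^3 + 3 * c 1 0 * M 0 1 * M 2 0 * (M 2 1)^2 + c 1 1 * M 0 0 * M 1 1 * (M 2 1)^2 + c 1 1 * M 0 1 * M 1 0 * (M 2 1)^2 + 2 * c 1 1 * M 0 1 * M 1 1 * M 2 0 * M 2 1 + c 1 2 * M 0 0 * (M 1 1)^2 * M 2 1 + 2 * c 1 2 * M 0 1 * M 1 0 * M 1 1 * M 2 1 + c 1 2 * M 0 1 * (M 1 1)^2 * M 2 0 + c 1 3 * M 0 0 * (M 1 1)^3 + 3 * c 1 3 * M 0 1 * M 1 0 * (M 1 1)^2 + 2 * c 2 0 * M 0 0 * M 0 1 * (M 2 1)^2 + 2 * c 2 0 * (M 0 1)^2 * M 2 0 * M 2 1 + 2 * c 2 1 * M 0 0 * M 0 1 * M 1 1 * M 2 1 + c 2 1 * (M 0 1)^2 * M 1 0 * M 2 1 + c 2 1 * (M 0 1)^2 * M 1 1 * M 2 0 + 2 * c 2 2 * M 0 0 * M 0 1 * (M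 1 1)^2 + 2 * c 2 2 * (M 0 1)^2 * M 1 0 * M 1 1 + 3 * c 3 0 * M 0 0 * (M 0 1)^2 * M 2 1 + c 3 0 * (M 0 1)^3 * M 2 0 + 3 * c 3 1 * M 0 0 * (M 0 1)^2 * M 1 1 + c 3 1 * (M 0 1)^3 * M 1 0 + 4 * c 4 0 * M 0 0 * (M 0 1)^3 else
    if i = 2 \<and> j = 0 then 6 * c 0 0 * (M 2 0)^2 * (M 2 2)^2 + 3 * c 0 1 * M 1 0 * M 2 0 * (M 2 2)^2 + 3 * c 0 1 * M 1 2 * (M 2 0)^2 * M 2 2 + c 0 2 * (M 1 0)^2 * (M 2 2)^2 + 4 * c 0 2 * M 1 0 * M 1 2 * M 2 0 * M 2 2 + c 0 2 * (M 1 2)^2 * (M 2 0)^2 + 3 * c 0 3 * (M 1 0)^2 * M 1 2 * M 2 2 + 3 * c 0 3 * M 1 0 * (M 1 2)^2 * M 2 0 + 6 * c 0 4 * (M 1 0)^2 * (M 1 2)^2 + 3 * c 1 0 * M 0 0 * M 2 0 * (M 2 2)^2 + 3 * c 1 0 * M 0 2 * (M 2 0)^2 * M 2 2 + c 1 1 * M 0 0 * M 1 0 * (M 2 2)^2 + 2 * c 1 1 * M 0 0 * M 1 2 * M 2 0 * M 2 2 + 2 * c 1 1 * M 0 2 * M 1 0 * M 2 0 * M 2 2 + c 1 1 * M 0 2 * M 1 2 * (M 2 0)^2 + 2 * c 1 2 * M 0 0 * M 1 0 * M 1 2 * M 2 2 + c 1 2 * M 0 0 * (M 1 2)^2 * M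 2 0 + c 1 2 * M 0 2 * (M 1 0)^2 * M 2 2 + 2 * c 1 2 * M 0 2 * M 1 0 * M 1 2 * M 2 0 + 3 * c 1 3 * M 0 0 * M 1 0 * (M 1 2)^2 + 3 * c 1 3 * M 0 2 * (M 1 0)^2 * M 1 2 + c 2 0 * (M 0 0)^2 * (M 2 2)^2 + 4 * c 2 0 * M 0 0 * M 0 2 * M 2 0 * M 2 2 + c 2 0 * (M 0 2)^2 * (M 2 0)^2 + c 2 1 * (M 0 0)^2 * M 1 2 * M 2 2 + 2 * c 2 1 * M 0 0 * M 0 2 * M 1 0 * M 2 2 + 2 * c 2 1 * M 0 0 * M 0 2 * M 1 2 * M 2 0 + c 2 1 * (M 0 2)^2 * M 1 0 * M 2 0 + c 2 2 * (M 0 0)^2 * (M 1 2)^2 + 4 * c 2 2 * M 0 0 * M 0 2 * M 1 0 * M 1 2 + c 2 2 * (M 0 2)^2 * (M 1 0)^2 + 3 * c 3 0 * (M 0 0)^2 * M 0 2 * M 2 2 + 3 * c 3 0 * M 0 0 * (M 0 2)^2 * M 2 0 + 3 * c 3 1 * (M 0 0)^2 * M 0 2 * M 1 2 + 3 * c 3 1 * M 0 0 * (M 0 2)^2 * M 1 0 + 6 * c 4 0 * (M 0 0)^2 * (M 0 2)^2 else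
    if i = 2 \<and> j = 1 then 12 * c 0 0 * (M 2 0)^2 * M 2 1 * M 2 2 + 6 * c 0 1 * M 1 0 * M 2 0 * M 2 1 * M 2 2 + 3 * c 0 1 * M 1 1 * (M 2 0)^2 * M 2 2 + 3 * c 0 1 * M 1 2 * (M 2 0)^2 * M 2 1 + 2 * c 0 2 * (M 1 0)^2 * M 2 1 * M 2 2 + 4 * c 0 2 * M 1 0 * M 1 1 * M 2 0 * M 2 2 + 4 * c 0 2 * M 1 0 * M 1 2 * M 2 0 * M 2 1 + 2 * c 0 2 * M 1 1 * M 1 2 * (M 2 0)^2 + 3 * c 0 3 * (M 1 0)^2 * M 1 1 * M 2 2 + 3 * c 0 3 * (M 1 0)^2 * M 1 2 * M 2 1 + 6 * c 0 3 * M 1 0 * M 1 1 * M 1 2 * M 2 0 + 12 * c 0 4 * (M 1 0)^2 * M 1 1 * M 1 2 + 6 * c 1 0 * M 0 0 * M 2 0 * M 2 1 * M 2 2 + 3 * c 1 0 * M 0 1 * (M 2 0)^2 * M 2 2 + 3 * c 1 0 * M 0 2 * (M 2 0)^2 * M 2 1 + 2 * c 1 1 * M 0 0 * M 1 0 * M 2 1 * M 2 2 + 2 * c 1 1 * M 0 0 * M 1 1 * M 2 0 * M 2 2 + 2 * c 1 1 * M 0 0 * M 1 2 * M 2 0 * M 2 1 + 2 * c 1 1 * M 0 1 * M 1 0 * M 2 0 * M 2 2 + c 1 1 * M 0 1 * M 1 2 * (M 2 0)^2 + 2 * c 1 1 * M 0 2 * M 1 0 * M 2 0 * M 2 1 +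 c 1 1 * M 0 2 * M 1 1 * (M 2 0)^2 + 2 * c 1 2 * M 0 0 * M 1 0 * M 1 1 * M 2 2 + 2 * c 1 2 * M 0 0 * M 1 0 * M 1 2 * M 2 1 + 2 * c 1 2 * M 0 0 * M 1 1 * M 1 2 * M 2 0 + c 1 2 * M 0 1 * (M 1 0)^2 * M 2 2 + 2 * c 1 2 * M 0 1 * M 1 0 * M 1 2 * M 2 0 + c 1 2 * M 0 2 * (M 1 0)^2 * M 2 1 + 2 * c 1 2 * M 0 2 * M 1 0 * M 1 1 * M 2 0 + 6 * c 1 3 * M 0 0 * M 1 0 * M 1 1 * M 1 2 + 3 * c 1 3 * M 0 1 * (M 1 0)^2 * M 1 2 + 3 * c 1 3 * M 0 2 * (M 1 0)^2 * M 1 1 + 2 * c 2 0 * (M 0 0)^2 * M 2 1 * M 2 2 + 4 * c 2 0 * M 0 0 * M 0 1 * M 2 0 * M 2 2 + 4 * c 2 0 * M 0 0 * M 0 2 * M 2 0 * M 2 1 + 2 * c 2 0 * M 0 1 * M 0 2 * (M 2 0)^2 + c 2 1 * (M 0 0)^2 * M 1 1 * M 2 2 + c 2 1 * (M 0 0)^2 * M 1 2 * M 2 1 + 2 * c 2 1 * M 0 0 * M 0 1 * M 1 0 * M 2 2 + 2 * c 2 1 * M 0 0 * M 0 1 * M 1 2 * M 2 0 + 2 * c 2 1 * M 0 0 * M 0 2 * M 1 0 * M 2 1 + 2 * c 2 1 * M 0 0 * M 0 2 * M 1 1 * M 2 0 + 2 * c 2 1 * M 0 1 * M 0 2 * M 1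 0 * M 2 0 + 2 * c 2 2 * (M 0 0)^2 * M 1 1 * M 1 2 + 4 * c 2 2 * M 0 0 * M 0 1 * M 1 0 * M 1 2 + 4 * c 2 2 * M 0 0 * M 0 2 * M 1 0 * M 1 1 + 2 * c 2 2 * M 0 1 * M 0 2 * (M 1 0)^2 + 3 * c 3 0 * (M 0 0)^2 * M 0 1 * M 2 2 + 3 * c 3 0 * (M 0 0)^2 * M 0 2 * M 2 1 + 6 * c 3 0 * M 0 0 * M 0 1 * M 0 2 * M 2 0 + 3 * c 3 1 * (M 0 0)^2 * M 0 1 * M 1 2 + 3 * c 3 1 * (M 0 0)^2 * M 0 2 * M 1 1 + 6 * c 3 1 * M 0 0 * M 0 1 * M 0 2 * M 1 0 + 12 * c 4 0 * (M 0 0)^2 * M 0 1 * M 0 2 else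
    if i = 2 \<and> j = 2 then 6 * c 0 0 * (M 2 0)^2 * (M 2 1)^2 + 3 * c 0 1 * M 1 0 * M 2 0 * (M 2 1)^2 + 3 * c 0 1 * M 1 1 * (M 2 0)^2 * M 2 1 + c 0 2 * (M 1 0)^2 * (M 2 1)^2 + 4 * c 0 2 * M 1 0 * M 1 1 * M 2 0 * M 2 1 + c 0 2 * (M 1 1)^2 * (M 2 0)^2 + 3 * c 0 3 * (M 1 0)^2 * M 1 1 * M 2 1 + 3 * c 0 3 * M 1 0 * (M 1 1)^2 * M 2 0 + 6 * c 0 4 * (M 1 0)^2 * (M 1 1)^2 + 3 * c 1 0 * M 0 0 * M 2 0 * (M 2 1)^2 + 3 * c 1 0 * M 0 1 * (M 2 0)^2 * M 2 1 + c 1 1 * M 0 0 * M 1 0 * (M 2 1)^2 + 2 * c 1 1 * M 0 0 * M 1 1 * M 2 0 * M 2 1 + 2 * c 1 1 * M 0 1 * M 1 0 * M 2 0 * M 2 1 + c 1 1 * M 0 1 * M 1 1 * (M 2 0)^2 + 2 * c 1 2 * M 0 0 * M 1 0 * M 1 1 * M 2 1 + c 1 2 * M 0 0 * (M 1 1)^2 * M 2 0 + c 1 2 * M 0 1 * (M 1 0)^2 * M 2 1 + 2 * c 1 2 * M 0 1 * M 1 0 * M 1 1 * M 2 0 + 3 * c 1 3 * M 0 0 * M 1 0 * (M 1 1)^2 + 3 * c 1 3 * M 0 1 * (M 1 0)^2 * M 1 1 + c 2 0 * (M 0 0)^2 * (M 2 1)^2 + 4 * c 2 0 * M 0 0 *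 M 0 1 * M 2 0 * M 2 1 + c 2 0 * (M 0 1)^2 * (M 2 0)^2 + c 2 1 * (M 0 0)^2 * M 1 1 * M 2 1 + 2 * c 2 1 * M 0 0 * M 0 1 * M 1 0 * M 2 1 + 2 * c 2 1 * M 0 0 * M 0 1 * M 1 1 * M 2 0 + c 2 1 * (M 0 1)^2 * M 1 0 * M 2 0 + c 2 2 * (M 0 0)^2 * (M 1 1)^2 + 4 * c 2 2 * M 0 0 * M 0 1 * M 1 0 * M 1 1 + c 2 2 * (M 0 1)^2 * (M 1 0)^2 + 3 * c 3 0 * (M 0 0)^2 * M 0 1 * M 2 1 + 3 * c 3 0 * M 0 0 * (M 0 1)^2 * M 2 0 + 3 * c 3 1 * (M 0 0)^2 * M 0 1 * M 1 1 + 3 * c 3 1 * M 0 0 * (M 0 1)^2 * M 1 0 + 6 * c 4 0 * (M 0 0)^2 * (M 0 1)^2 else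
    if i = 3 \<and> j = 0 then 4 * c 0 0 * (M 2 0)^3 * M 2 2 + 3 * c 0 1 * M 1 0 * (M 2 0)^2 * M 2 2 + c 0 1 * M 1 2 * (M 2 0)^3 + 2 * c 0 2 * (M 1 0)^2 * M 2 0 * M 2 2 + 2 * c 0 2 * M 1 0 * M 1 2 * (M 2 0)^2 + c 0 3 * (M 1 0)^3 * M 2 2 + 3 * c 0 3 * (M 1 0)^2 * M 1 2 * M 2 0 + 4 * c 0 4 * (M 1 0)^3 * M 1 2 + 3 * c 1 0 * M 0 0 * (M 2 0)^2 * M 2 2 + c 1 0 * M 0 2 * (M 2 0)^3 + 2 * c 1 1 * M 0 0 * M 1 0 * M 2 0 * M 2 2 + c 1 1 * M 0 0 * M 1 2 * (M 2 0)^2 + c 1 1 * M 0 2 * M 1 0 * (M 2 0)^2 + c 1 2 * M 0 0 * (M 1 0)^2 * M 2 2 + 2 * c 1 2 * M 0 0 * M 1 0 * M 1 2 * M 2 0 + c 1 2 * M 0 2 * (M 1 0)^2 * M 2 0 + 3 * c 1 3 * M 0 0 * (M 1 0)^2 * M 1 2 + c 1 3 * M 0 2 * (M 1 0)^3 + 2 * c 2 0 * (M 0 0)^2 * M 2 0 * M 2 2 + 2 * c 2 0 * M 0 0 * M 0 2 * (M 2 0)^2 + c 2 1 * (M 0 0)^2 * M 1 0 * M 2 2 + c 2 1 * (M 0 0)^2 * M 1 2 * M 2 0 + 2 * c 2 1 * M 0 0 * M 0 2 * M 1 0 * M 2 0 + 2 * c 2 2 * (M 0 0)^2 * M 1 0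 * M 1 2 + 2 * c 2 2 * M 0 0 * M 0 2 * (M 1 0)^2 + c 3 0 * (M 0 0)^3 * M 2 2 + 3 * c 3 0 * (M 0 0)^2 * M 0 2 * M 2 0 + c 3 1 * (M 0 0)^3 * M 1 2 + 3 * c 3 1 * (M 0 0)^2 * M 0 2 * M 1 0 + 4 * c 4 0 * (M 0 0)^3 * M 0 2 else
    if i = 3 \<and> j = 1 then 4 * c 0 0 * (M 2 0)^3 * M 2 1 + 3 * c 0 1 * M 1 0 * (M 2 0)^2 * M 2 1 + c 0 1 * M 1 1 * (M 2 0)^3 + 2 * c 0 2 * (M 1 0)^2 * M 2 0 * M 2 1 + 2 * c 0 2 * M 1 0 * M 1 1 * (M 2 0)^2 + c 0 3 * (M 1 0)^3 * M 2 1 + 3 * c 0 3 * (M 1 0)^2 * M 1 1 * M 2 0 + 4 * c 0 4 * (M 1 0)^3 * M 1 1 + 3 * c 1 0 * M 0 0 * (M 2 0)^2 * M 2 1 + c 1 0 * M 0 1 * (M 2 0)^3 + 2 * c 1 1 * M 0 0 * M 1 0 * M 2 0 * M 2 1 + c 1 1 * M 0 0 * M 1 1 * (M 2 0)^2 + c 1 1 * M 0 1 * M 1 0 * (M 2 0)^2 + c 1 2 * M 0 0 * (M 1 0)^2 * M 2 1 + 2 * c 1 2 * M 0 0 * M 1 0 * M 1 1 * M 2 0 + c 1 2 * M 0 1 * (M 1 0)^2 * M 2 0 + 3 * c 1 3 * M 0 0 * (M 1 0)^2 * M 1 1 + c 1 3 * M 0 1 * (M 1 0)^3 + 2 * c 2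 0 * (M 0 0)^2 * M 2 0 * M 2 1 + 2 * c 2 0 * M 0 0 * M 0 1 * (M 2 0)^2 + c 2 1 * (M 0 0)^2 * M 1 0 * M 2 1 + c 2 1 * (M 0 0)^2 * M 1 1 * M 2 0 + 2 * c 2 1 * M 0 0 * M 0 1 * M 1 0 * M 2 0 + 2 * c 2 2 * (M 0 0)^2 * M 1 0 * M 1 1 + 2 * c 2 2 * M 0 0 * M 0 1 * (M 1 0)^2 + c 3 0 * (M 0 0)^3 * M 2 1 + 3 * c 3 0 * (M 0 0)^2 * M 0 1 * M 2 0 + c 3 1 * (M 0 0)^3 * M 1 1 + 3 * c 3 1 * (M 0 0)^2 * M 0 1 * M 1 0 + 4 * c 4 0 * (M 0 0)^3 * M 0 1 else
    if i = 4 \<and> j = 0 then c 0 0 * (M 2 0)^4 + c 0 1 * M 1 0 * (M 2 0)^3 + c 0 2 * (M 1 0)^2 * (M 2 0)^2 + c 0 3 * (M 1 0)^3 * M 2 0 + c 0 4 * (M 1 0)^4 + c 1 0 * M 0 0 * (M 2 0)^3 + c 1 1 * M 0 0 * M 1 0 * (M 2 0)^2 + c 1 2 * M 0 0 * (M 1 0)^2 * M 2 0 + c 1 3 * M 0 0 * (M 1 0)^3 + c 2 0 * (M 0 0)^2 * (M 2 0)^2 + c 2 1 * (M 0 0)^2 * M 1 0 * M 2 0 + c 2 2 * (M 0 0)^2 * (M 1 0)^2 + c 3 0 * (M 0 0)^3 * M 2 0 + c 3 1 * (M 0 0)^3 * M 1 0 + c 4 0 * (M 0 0)^4 else 0)"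

lemma qeval_comp: fixes c :: "nat \<Rightarrow> nat \<Rightarrow> 'a::field" 
  shows "qeval (comp c M) (x,y,z) = qeval c (lin M (x,y,z))"
  unfolding qeval_expl lin_def prod.case
  apply (simp only: comp_def if_True if_False simp_thms nat.distinct zero_neq_numeral numeral_eq_iff semiring_norm)
  by algebra

lemma pt_cases3: "(\<And>x y z. P (x,y,z)) \<Longrightarrow> P p" by (cases p) auto

definition dot :: "'a::comm_ring_1 pt \<Rightarrow> 'a pt \<Rightarrow> 'a" where
  "dot u p = (case u of (a,b,d) \<Rightarrow> case p of (x,y,z) \<Rightarrow> a*x+b*y+d*z)"

lemma line_set_dot: "line_set v = {p. dot v p = 0}"
  by (cases v) (auto simp: line_set_def dot_def)

definition tr :: "(nat \<Rightarrow> nat \<Rightarrow> 'a) \<Rightarrow> nat \<Rightarrow> nat \<Rightarrow> 'a" where "tr M i j = M j i"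

definition adj :: "(nat \<Rightarrow> nat \<Rightarrow> 'a::comm_ring_1) \<Rightarrow> nat \<Rightarrow> nat \<Rightarrow> 'a" where
  "adj M i j = (if i = 0 \<and> j = 0 then M 1 1 * M 2 2 - M 1 2 * M 2 1 else
                if i = 0 \<and> j = 1 then M 0 2 * M 2 1 - M 0 1 * M 2 2 else
                if i = 0 \<and> j = 2 then M 0 1 * M 1 2 - M 0 2 * M 1 1 else
                if i = 1 \<and> j = 0 then M 1 2 * M 2 0 - M 1 0 * M 2 2 else
                if i = 1 \<and> j = 1 then M 0 0 * M 2 2 - M 0 2 * M 2 0 else
                if i = 1 \<and> j = 2 then M 0 2 * M 1 0 - M 0 0 * M 1 2 else
                if i = 2 \<and> j = 0 then M 1 0 * M 2 1 - M 1 1 * M 2 0 else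
                if i = 2 \<and> j = 1 then M 0 1 * M 2 0 - M 0 0 * M 2 1 else
                M 0 0 * M 1 1 - M 0 1 * M 1 0)"

lemma adj_simps: "adj M 0 0 = M 1 1 * M 2 2 - M 1 2 * M 2 1" "adj M 0 1 = M 0 2 * M 2 1 - M 0 1 * M 2 2"
  "adj M 0 2 = M 0 1 * M 1 2 - M 0 2 * M 1 1" "adj M 1 0 = M 1 2 * M 2 0 - M 1 0 * M 2 2"
  "adj M 1 1 = M 0 0 * M 2 2 - M 0 2 * M 2 0" "adj M 1 2 = M 0 2 * M 1 0 - M 0 0 * M 1 2"
  "adj M 2 0 = M 1 0 * M 2 1 - M 1 1 * M 2 0" "adj M 2 1 = M 0 1 * M 2 0 - M 0 0 * M 2 1"
  "adj M 2 2 = M 0 0 * M 1 1 - M 0 1 * M 1 0"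
  by (simp_all add: adj_def)

lemmas unf = lin_def dot_def cross_def pt_add_def pt_scale_def tr_def adj_simps det3_def prod.case

lemma dot_lin: fixes M :: "nat \<Rightarrow> nat \<Rightarrow> 'a::field" shows "dot v (lin M p) = dot (lin (tr M) v) p"
  by (rule pt_cases3[of _ p], rule pt_cases3[of _ v]) (simp only: unf prod.inject, algebra)

lemma lin_add_scale: fixes M :: "nat \<Rightarrow> nat \<Rightarrow> 'a::field" shows "lin M (pt_add p (pt_scale t r)) = pt_add (lin M p) (pt_scale t (lin M r))"
  by (rule pt_cases3[of _ p], rule pt_cases3[of _ r]) (simp only: unf prod.inject, algebra)

lemma lin_add: fixes M :: "nat \<Rightarrow> nat \<Rightarrow> 'a::field" shows "lin M (pt_add p r) = pt_add (lin M p) (lin M r)"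
  by (rule pt_cases3[of _ p], rule pt_cases3[of _ r]) (simp only: unf prod.inject, algebra)

lemma lin_scale: fixes M :: "nat \<Rightarrow> nat \<Rightarrow> 'a::field" shows "lin M (pt_scale t r) = pt_scale t (lin M r)"
  by (rule pt_cases3[of _ r]) (simp only: unf prod.inject, algebra)

lemma cross_lin: fixes M :: "nat \<Rightarrow> nat \<Rightarrow> 'a::field" shows "lin (tr M) (cross (lin M p) (lin M r)) = pt_scale (det3 M) (cross p r)"
  by (rule pt_cases3[of _ p], rule pt_cases3[of _ r]) (simp only: unf prod.inject, algebra)

lemma dot_cross_lin: fixes M :: "nat \<Rightarrow> nat \<Rightarrow> 'a::field" shows "dot (cross (lin M P) (lin M R)) (lin M X) = det3 M * dot (cross P R) X"
  by (rule pt_cases3[of _ P], rule pt_cases3[of _ R], rule pt_cases3[of _ X]) (simp only: unf prod.inject, algebra)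

lemma dot_cross1: fixes A :: "'a::field pt" shows "dot (cross A B) A = 0"
  by (rule pt_cases3[of _ A], rule pt_cases3[of _ B]) (simp only: unf prod.inject, algebra)
lemma dot_cross2: fixes A :: "'a::field pt" shows "dot (cross A B) B = 0"
  by (rule pt_cases3[of _ A], rule pt_cases3[of _ B]) (simp only: unf prod.inject, algebra)

lemma dot_scale: fixes v :: "'a::field pt" shows "dot (pt_scale k v) p = k * dot v p"
  by (rule pt_cases3[of _ p], rule pt_cases3[of _ v]) (simp only: unf prod.inject, algebra)

lemma line_set_scale: fixes v :: "'a::field pt" shows "k \<noteq> 0 \<Longrightarrow> line_set (pt_scale k v) = line_set v"
  by (simp add: line_set_dot dot_scale)

lemma pt_scale_eq0: fixes v :: "'a::field pt" shows "pt_scale k v = (0,0,0) \<longleftrightarrow> k = 0 \<or> v = (0,0,0)"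
  by (rule pt_cases3[of _ v]) (auto simp: unf)

lemma pt_scale_1: "pt_scale 1 (v::'a::comm_ring_1 pt) = v"
  by (rule pt_cases3[of _ v]) (auto simp: unf)


lemma det3_adj: fixes M :: "nat \<Rightarrow> nat \<Rightarrow> 'a::field" shows "det3 (adj M) = det3 M ^ 2"
  by (simp only: unf prod.inject, algebra)
lemma lin_adj: fixes M :: "nat \<Rightarrow> nat \<Rightarrow> 'a::field" shows "lin M (lin (adj M) p) = pt_scale (det3 M) p"
  by (rule pt_cases3[of _ p]) (simp only: unf prod.inject, algebra)
lemma adj_lin: fixes M :: "nat \<Rightarrow> nat \<Rightarrow> 'a::field" shows "lin (adj M) (lin M p) = pt_scale (det3 M) p"
  by (rule pt_cases3[of _ p]) (simp only: unf prod.inject, algebra)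
lemma tr_adj_lin: fixes M :: "nat \<Rightarrow> nat \<Rightarrow> 'a::field" shows "lin (tr (adj M)) (lin (tr M) v) = pt_scale (det3 M) v"
  by (rule pt_cases3[of _ v]) (simp only: unf prod.inject, algebra)

definition ws :: "'a::comm_ring_1 \<Rightarrow> ('a pt \<Rightarrow> 'a) \<Rightarrow> 'a pt \<Rightarrow> 'a pt \<Rightarrow> 'a" where
  "ws om F p r = F (pt_add p (pt_scale 1 r)) + F p + F r
     + om^2 * (F (pt_add p (pt_scale om r)) + F p + om^4 * F r)
     + om^4 * (F (pt_add p (pt_scale (om^2) r)) + F p + om^8 * F r)"

lemma om_pows: fixes om :: "'a::field" assumes om: "om^2 + om + 1 = 0"
  shows "om^3 = 1" "om^4 = om" "om^8 = om^2" "(om^2)^2 = om" "(om^2)^3 = 1" "(om^2)^4 = om^2"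
    "om^5 = om^2" "om^6 = 1"
proof -
  show o3: "om^3 = 1" using om by algebra
  have "om^4 = om^3 * om" by (simp add: power_Suc2 numeral_eq_Suc)
  then show o4: "om^4 = om" using o3 by simp
  have "om^8 = om^4 * om^4" by (simp add: power_add[symmetric])
  then show "om^8 = om^2" using o4 by (simp add: power2_eq_square)
  show "(om^2)^2 = om" using o4 by (simp add: power_mult[symmetric])
  show "(om^2)^3 = 1" using o3 by (metis power_mult power_mult_distrib power_one mult.commute)
  have "om^6 = om^3 * om^3" by (simp add: power_add[symmetric])
  then show o6: "om^6 = 1" using o3 by simp
  have "(om^2)^4 = om^8" by (simp add: power_mult[symmetric])
  also have "om^8 = om^4 * om^4" by (simp add: power_add[symmetric])
  finally show "(om^2)^4 = om^2" using o4 by (simp add: power2_eq_square)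
  have "om^5 = om^3 * om^2" by (simp add: power_add[symmetric])
  then show "om^5 = om^2" using o3 by simp
qed

lemma ws_abs: fixes om :: "'a::field"
  assumes two: "(2::'a) = 0" and om: "om^2 + om + 1 = 0"
  shows "P + 1 * D + 1^2 * E + 1^3 * D3 + 1^4 * R + P + R
     + om^2 * (P + om * D + om^2 * E + om^3 * D3 + om^4 * R + P + om^4 * R)
     + om^4 * (P + om^2 * D + (om^2)^2 * E + (om^2)^3 * D3 + (om^2)^4 * R + P + om^8 * R) = D"
proof -
  have "P + 1 * D + 1^2 * E + 1^3 * D3 + 1^4 * R + P + R
     + om^2 * (P + om * D + om^2 * E + om^3 * D3 + om^4 * R + P + om^4 * R)
     + om^4 * (P + om^2 * D + (om^2)^2 * E + (om^2)^3 * D3 + (om^2)^4 * R + P + om^8 * R)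
     = P + D + E + D3 + R + P + R
     + om^2 * (P + om * D + om^2 * E + D3 + om * R + P + om * R)
     + om * (P + om^2 * D + om * E + D3 + om^2 * R + P + om^2 * R)"
    by (simp only: om_pows[OF om] power_one mult_1_left)
  also have "\<dots> = D + (D + R + R + R) + (D + R + R + R)"
    using om by algebra
  also have "\<dots> = D" using two by (simp add: mult_2[symmetric])
  finally show ?thesis .
qed

lemma D_ws: fixes c :: "nat \<Rightarrow> nat \<Rightarrow> 'a::field"
  assumes two: "(2::'a) = 0" and om: "om^2 + om + 1 = 0"
  shows "Dd c p r = ws om (qeval c) p r"
proof (rule pt_cases3[of _ p], rule pt_cases3[of _ r])
  fix x y z u v w
  show "Dd c (x,y,z) (u,v,w) = ws om (qeval c) (x,y,z) (u,v,w)"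
    unfolding ws_def taylor by (rule sym, rule ws_abs[OF two om])
qed

lemma D_fun: fixes c :: "nat \<Rightarrow> nat \<Rightarrow> 'a::field" and om :: 'a
  assumes two: "(2::'a) = 0" and om: "om^2 + om + 1 = 0"
    and h: "\<forall>q. qeval c' q = qeval c (lin M q)"
  shows "Dd c' p r = Dd c (lin M p) (lin M r)"
proof -
  have "Dd c' p r = ws om (qeval c') p r" by (rule D_ws[OF two om])
  also have "\<dots> = ws om (qeval c) (lin M p) (lin M r)"
    by (simp only: ws_def h lin_add_scale)
  also have "\<dots> = Dd c (lin M p) (lin M r)" by (rule D_ws[OF two om, symmetric])
  finally show ?thesis .
qed

lemma Dd_e1: "Dd c p (1,0,0) = qdx c p" by (simp add: Dd_def)
lemma Dd_e2: "Dd c p (0,1,0) = qdy c p" by (simp add: Dd_def)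
lemma Dd_e3: "Dd c p (0,0,1) = qdz c p" by (simp add: Dd_def)

lemma NS_comp: fixes c :: "nat \<Rightarrow> nat \<Rightarrow> 'a::field" and om :: 'a
  assumes two: "(2::'a) = 0" and om: "om^2 + om + 1 = 0"
    and h: "\<forall>q. qeval c' q = qeval c (lin M q)" and dM: "det3 M \<noteq> 0"
    and ns: "nonsingular_quartic c"
  shows "nonsingular_quartic c'"
  unfolding nonsingular_quartic_def
proof (intro allI impI notI)
  fix p :: "'a pt" assume p0: "p \<noteq> (0,0,0)" and sing: "qeval c' p = 0 \<and> qdx c' p = 0 \<and> qdy c' p = 0 \<and> qdz c' p = 0"
  define q where "q = lin M p"
  have q0: "q \<noteq> (0,0,0)"
  proof
    assume "q = (0,0,0)"
    then have "lin (adj M) q = (0,0,0)" by (simp add: lin_def)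
    then have "pt_scale (det3 M) p = (0,0,0)" unfolding q_def adj_lin .
    then show False using dM p0 by (simp add: pt_scale_eq0)
  qed
  have Dz: "Dd c q e = 0" for e
  proof -
    define r where "r = pt_scale (1 / det3 M) (lin (adj M) e)"
    have "lin M r = e" unfolding r_def lin_scale lin_adj
      by (rule pt_cases3[of _ e]) (simp add: pt_scale_def dM)
    then have "Dd c q e = Dd c' p r" unfolding q_def using D_fun[OF two om h] by simp
    also have "\<dots> = 0" using sing by (cases r) (simp add: Dd_def)
    finally show ?thesis .
  qed
  have "qeval c q = 0" using sing h q_def by simp
  moreover have "qdx c q = 0" "qdy c q = 0" "qdz c q = 0"
    using Dz[of "(1,0,0)"] Dz[of "(0,1,0)"] Dz[of "(0,0,1)"] by (simp_all add: Dd_e1 Dd_e2 Dd_e3)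
  ultimately show False using ns q0 unfolding nonsingular_quartic_def by blast
qed

lemma om_ex: assumes "alg_closed TYPE('a::field)" shows "\<exists>om::'a. om^2 + om + 1 = 0"
proof -
  have "degree [:1,1,1::'a:] > 0" by simp
  then obtain x :: 'a where "poly [:1,1,1:] x = 0" using assms unfolding alg_closed_def by blast
  then have "x^2 + x + 1 = 0" by (simp add: power2_eq_square algebra_simps)
  then show ?thesis by blast
qed

lemma quad_root: assumes "alg_closed TYPE('a::field)" and "A \<noteq> 0"
  shows "\<exists>X::'a. A*X^2 + B*X + C = 0"
proof -
  have "degree [:C,B,A:] > 0" using assms(2) by simp
  then obtain x :: 'a where "poly [:C,B,A:] x = 0" using assms(1) unfolding alg_closed_def by blast
  then have "A*x^2 + B*x + C = 0" by (simp add: power2_eq_square algebra_simps)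
  then show ?thesis by blast
qed

lemma two_char2: "char2 TYPE('a::field) \<Longrightarrow> (2::'a) = 0"
  unfolding char2_def by (metis one_add_one)

lemma sf_0: "is_subfield K \<Longrightarrow> 0 \<in> K" and sf_1: "is_subfield K \<Longrightarrow> 1 \<in> K"
  and sf_add: "is_subfield K \<Longrightarrow> x \<in> K \<Longrightarrow> y \<in> K \<Longrightarrow> x + y \<in> K"
  and sf_mult: "is_subfield K \<Longrightarrow> x \<in> K \<Longrightarrow> y \<in> K \<Longrightarrow> x * y \<in> K"
  and sf_uminus: "is_subfield K \<Longrightarrow> x \<in> K \<Longrightarrow> - x \<in> K"
  by (auto simp: is_subfield_def)

lemma sf_inv: "is_subfield K \<Longrightarrow> x \<in> K \<Longrightarrow> inverse x \<in> K"
  by (cases "x = 0") (auto simp: is_subfield_def)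

lemma sf_diff: "is_subfield K \<Longrightarrow> x \<in> K \<Longrightarrow> y \<in> K \<Longrightarrow> x - y \<in> K"
  using sf_add[of K x "-y"] sf_uminus[of K y] by simp

lemma sf_div: "is_subfield K \<Longrightarrow> x \<in> K \<Longrightarrow> y \<in> K \<Longrightarrow> x / y \<in> K"
  using sf_mult[of K x "inverse y"] sf_inv[of K y] by (simp add: divide_inverse)

lemma sf_pow: "is_subfield K \<Longrightarrow> x \<in> K \<Longrightarrow> x ^ n \<in> K"
  by (induction n) (auto intro: sf_mult sf_1)

lemmas sf_intros = sf_0 sf_1 sf_add sf_mult sf_uminus sf_diff sf_div sf_pow

lemma sqrt_K: fixes K :: "'a::field set"
  assumes sf: "is_subfield K" and fin: "finite K" and two: "(2::'a) = 0" and x: "x \<in> K"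
  shows "\<exists>r\<in>K. r^2 = x"
proof -
  have inj: "inj_on (\<lambda>r. r^2) K"
  proof (rule inj_onI)
    fix r s :: 'a assume "r^2 = s^2"
    then have "(r + s)^2 = 0" using two by (simp add: power2_eq_square algebra_simps)
    then have "r + s = 0" by simp
    then show "r = s" using two by (metis add_diff_cancel_left' diff_0 eq_neg_iff_add_eq_0 mult_2 mult_zero_left add.commute)
  qed
  have sub: "(\<lambda>r. r^2) ` K \<subseteq> K" using sf by (auto intro: sf_pow)
  have "(\<lambda>r. r^2) ` K = K" by (rule endo_inj_surj[OF fin sub inj])
  then show ?thesis using x by (metis imageE)
qed

lemma span_aux: fixes n :: "'a::field"
  assumes "n \<noteq> 0" "n*u1 = A*p1 + B*r1" "n*u2 = A*p2+B*r2" "n*u3 = A*p3+B*r3"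
  shows "(u1,u2,u3) = pt_add (pt_scale (A/n) (p1,p2,p3)) (pt_scale (B/n) (r1,r2,r3))"
  using assms by (simp add: pt_add_def pt_scale_def field_simps)

lemma span_line: fixes v P R U :: "'a::field pt"
  assumes v0: "v \<noteq> (0,0,0)" and hP: "P \<in> line_set v" and hR: "R \<in> line_set v"
    and cr: "cross P R \<noteq> (0,0,0)" and hU: "U \<in> line_set v"
  shows "\<exists>a b. U = pt_add (pt_scale a P) (pt_scale b R)"
proof -
  obtain v1 v2 v3 where v: "v = (v1,v2,v3)" by (cases v) auto
  obtain p1 p2 p3 where P: "P = (p1,p2,p3)" by (cases P) auto
  obtain r1 r2 r3 where R: "R = (r1,r2,r3)" by (cases R) auto
  obtain u1 u2 u3 where U: "U = (u1,u2,u3)" by (cases U) auto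
  have eP: "v1*p1+v2*p2+v3*p3 = 0" using hP by (simp add: v P line_set_def)
  have eR: "v1*r1+v2*r2+v3*r3 = 0" using hR by (simp add: v R line_set_def)
  have eU: "v1*u1+v2*u2+v3*u3 = 0" using hU by (simp add: v U line_set_def)
  define n1 where "n1 = p2*r3 - p3*r2"
  define n2 where "n2 = p3*r1 - p1*r3"
  define n3 where "n3 = p1*r2 - p2*r1"
  have cr': "n1 \<noteq> 0 \<or> n2 \<noteq> 0 \<or> n3 \<noteq> 0" using cr by (auto simp: P R cross_def n1_def n2_def n3_def)
  have i1: "v1 * (n1*u1+n2*u2+n3*u3) = 0" using eP eR eU unfolding n1_def n2_def n3_def by algebra
  have i2: "v2 * (n1*u1+n2*u2+n3*u3) = 0" using eP eR eU unfolding n1_def n2_def n3_def by algebra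
  have i3: "v3 * (n1*u1+n2*u2+n3*u3) = 0" using eP eR eU unfolding n1_def n2_def n3_def by algebra
  have nU: "n1*u1+n2*u2+n3*u3 = 0" using i1 i2 i3 v0 v by auto
  show ?thesis
  proof (cases "n3 \<noteq> 0")
    case True
    have e1: "n3*u1 = (u1*r2 - u2*r1)*p1 + (p1*u2 - p2*u1)*r1" unfolding n3_def by algebra
    have e2: "n3*u2 = (u1*r2 - u2*r1)*p2 + (p1*u2 - p2*u1)*r2" unfolding n3_def by algebra
    have e3: "n3*u3 = (u1*r2 - u2*r1)*p3 + (p1*u2 - p2*u1)*r3" using nU unfolding n1_def n2_def n3_def by algebra
    show ?thesis using span_aux[OF True e1 e2 e3] unfolding U P R by blast
  next
    case False
    show ?thesis
    proof (cases "n2 \<noteq> 0")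
      case True
      have e1: "n2*u1 = (u3*r1 - u1*r3)*p1 + (p3*u1 - p1*u3)*r1" unfolding n2_def by algebra
      have e2: "n2*u2 = (u3*r1 - u1*r3)*p2 + (p3*u1 - p1*u3)*r2" using nU unfolding n1_def n2_def n3_def by algebra
      have e3: "n2*u3 = (u3*r1 - u1*r3)*p3 + (p3*u1 - p1*u3)*r3" unfolding n2_def by algebra
      show ?thesis using span_aux[OF True e1 e2 e3] unfolding U P R by blast
    next
      case False2: False
      then have T: "n1 \<noteq> 0" using cr' False by auto
      have e1: "n1*u1 = (u2*r3 - u3*r2)*p1 + (p2*u3 - p3*u2)*r1" using nU unfolding n1_def n2_def n3_def by algebra
      have e2: "n1*u2 = (u2*r3 - u3*r2)*p2 + (p2*u3 - p3*u2)*r2" unfolding n1_def by algebra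
      have e3: "n1*u3 = (u2*r3 - u3*r2)*p3 + (p2*u3 - p3*u2)*r3" unfolding n1_def by algebra
      show ?thesis using span_aux[OF T e1 e2 e3] unfolding U P R by blast
    qed
  qed
qed

lemma bt_abs: fixes om :: "'a::field"
  assumes two: "(2::'a) = 0" and om: "om^2 + om + 1 = 0"
    and F: "\<forall>t. F t = (G0 + G1*t + G2*t^2)^2"
  shows "F 1 + G0^2 + G2^2 + om^2*(F om + G0^2 + om^4*G2^2) + om^4*(F (om^2) + G0^2 + om^8*G2^2) = 0"
proof -
  have "F 1 + G0^2 + G2^2 + om^2*(F om + G0^2 + om^4*G2^2) + om^4*(F (om^2) + G0^2 + om^8*G2^2)
     = (G0 + G1 + G2)^2 + G0^2 + G2^2 + om^2*((G0 + G1*om + G2*om^2)^2 + G0^2 + om*G2^2)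
        + om*((G0 + G1*om^2 + G2*om)^2 + G0^2 + om^2*G2^2)"
    using F by (simp add: om_pows[OF om])
  also have "\<dots> = (G0*G1 + G0*G1 + G0*G1 + G2^2 + G2^2 + G2^2) + (G0*G1 + G0*G1 + G0*G1 + G2^2 + G2^2 + G2^2)"
    using om by algebra
  also have "\<dots> = 0" using two by (simp add: mult_2[symmetric])
  finally show ?thesis .
qed

lemma BT: fixes c :: "nat \<Rightarrow> nat \<Rightarrow> 'a::field" and om :: 'a
  assumes two: "(2::'a) = 0" and om: "om^2 + om + 1 = 0"
    and bt: "is_bitangent c v" and hU: "U \<in> line_set v" and hV: "V \<in> line_set v"
  shows "Dd c U V = 0"
proof -
  obtain P R g0 g1 g2 where v0: "v \<noteq> (0,0,0)" and hP: "P \<in> line_set v" and hR: "R \<in> line_set v"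
    and cr: "cross P R \<noteq> (0,0,0)"
    and sq: "\<forall>s t. qeval c (pt_add (pt_scale s P) (pt_scale t R)) = (g0 * s ^ 2 + g1 * s * t + g2 * t ^ 2) ^ 2"
    using bt unfolding is_bitangent_def by blast
  obtain a b where U: "U = pt_add (pt_scale a P) (pt_scale b R)" using span_line[OF v0 hP hR cr hU] by blast
  obtain a' b' where V: "V = pt_add (pt_scale a' P) (pt_scale b' R)" using span_line[OF v0 hP hR cr hV] by blast
  define G0 where "G0 = g0*a^2 + g1*a*b + g2*b^2"
  define G1 where "G1 = 2*g0*a*a' + g1*(a*b' + a'*b) + 2*g2*b*b'"
  define G2 where "G2 = g0*a'^2 + g1*a'*b' + g2*b'^2"
  have lin: "pt_add U (pt_scale t V) = pt_add (pt_scale (a + t*a') P) (pt_scale (b + t*b') R)" for t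
    unfolding U V by (rule pt_cases3[of _ P], rule pt_cases3[of _ R]) (simp only: unf prod.inject, algebra)
  have F: "\<forall>t. qeval c (pt_add U (pt_scale t V)) = (G0 + G1*t + G2*t^2)^2"
  proof
    fix t
    have "qeval c (pt_add U (pt_scale t V)) = (g0 * (a + t*a') ^ 2 + g1 * (a + t*a') * (b + t*b') + g2 * (b + t*b') ^ 2) ^ 2"
      unfolding lin using sq by blast
    also have "\<dots> = (G0 + G1*t + G2*t^2)^2" unfolding G0_def G1_def G2_def by algebra
    finally show "qeval c (pt_add U (pt_scale t V)) = (G0 + G1*t + G2*t^2)^2" .
  qed
  have qU: "qeval c U = G0^2" using sq unfolding U G0_def by simp
  have qV: "qeval c V = G2^2" using sq unfolding V G2_def by simp
  have "Dd c U V = ws om (qeval c) U V" by (rule D_ws[OF two om])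
  also have "\<dots> = 0" unfolding ws_def qU qV by (rule bt_abs[OF two om F])
  finally show ?thesis .
qed

definition cmp3 :: "'a pt \<Rightarrow> nat \<Rightarrow> 'a" where
  "cmp3 p i = (case p of (x,y,z) \<Rightarrow> if i = 0 then x else if i = 1 then y else z)"

definition colsM :: "'a pt \<Rightarrow> 'a pt \<Rightarrow> 'a pt \<Rightarrow> nat \<Rightarrow> nat \<Rightarrow> 'a" where
  "colsM A B C i j = cmp3 (if j = 0 then A else if j = 1 then B else C) i"

definition frame :: "'a::comm_ring_1 pt \<Rightarrow> 'a pt \<Rightarrow> 'a pt \<Rightarrow> nat \<Rightarrow> nat \<Rightarrow> 'a" where
  "frame w1 w2 w3 = colsM (cross w2 w3) (cross w3 w1) (cross w1 w2)"

definition trip :: "'a::comm_ring_1 pt \<Rightarrow> 'a pt \<Rightarrow> 'a pt \<Rightarrow> 'a" where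
  "trip w1 w2 w3 = dot w1 (cross w2 w3)"

lemma colsM_simps: "colsM (a0,a1,a2) (b0,b1,b2) (c0,c1,c2) 0 0 = a0"
  "colsM (a0,a1,a2) (b0,b1,b2) (c0,c1,c2) 1 0 = a1"
  "colsM (a0,a1,a2) (b0,b1,b2) (c0,c1,c2) 2 0 = a2"
  "colsM (a0,a1,a2) (b0,b1,b2) (c0,c1,c2) 0 1 = b0"
  "colsM (a0,a1,a2) (b0,b1,b2) (c0,c1,c2) 1 1 = b1"
  "colsM (a0,a1,a2) (b0,b1,b2) (c0,c1,c2) 2 1 = b2"
  "colsM (a0,a1,a2) (b0,b1,b2) (c0,c1,c2) 0 2 = c0"
  "colsM (a0,a1,a2) (b0,b1,b2) (c0,c1,c2) 1 2 = c1"
  "colsM (a0,a1,a2) (b0,b1,b2) (c0,c1,c2) 2 2 = c2"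
  by (simp_all add: colsM_def cmp3_def)

lemma cross_expl: "cross (a,b,c) (d,e,f) = (b*f - c*e, c*d - a*f, a*e - b*d)"
  by (simp add: cross_def)

lemmas funf = frame_def cross_expl colsM_simps lin_def dot_def det3_def trip_def prod.case

lemma frame_dot1: fixes w1 :: "'a::field pt" shows "dot w1 (lin (frame w1 w2 w3) (x,y,z)) = trip w1 w2 w3 * x"
  by (rule pt_cases3[of _ w1], rule pt_cases3[of _ w2], rule pt_cases3[of _ w3])
     (simp only: funf, algebra)
lemma frame_dot2: fixes w1 :: "'a::field pt" shows "dot w2 (lin (frame w1 w2 w3) (x,y,z)) = trip w1 w2 w3 * y"
  by (rule pt_cases3[of _ w1], rule pt_cases3[of _ w2], rule pt_cases3[of _ w3])
     (simp only: funf, algebra)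
lemma frame_dot3: fixes w1 :: "'a::field pt" shows "dot w3 (lin (frame w1 w2 w3) (x,y,z)) = trip w1 w2 w3 * z"
  by (rule pt_cases3[of _ w1], rule pt_cases3[of _ w2], rule pt_cases3[of _ w3])
     (simp only: funf, algebra)
lemma frame_det: fixes w1 :: "'a::field pt" shows "det3 (frame w1 w2 w3) = (trip w1 w2 w3)^2"
  by (rule pt_cases3[of _ w1], rule pt_cases3[of _ w2], rule pt_cases3[of _ w3])
     (simp only: funf, algebra)
lemma frame_e3: fixes w1 :: "'a::field pt" shows "lin (frame w1 w2 w3) (0,0,1) = cross w1 w2"
  by (rule pt_cases3[of _ w1], rule pt_cases3[of _ w2], rule pt_cases3[of _ w3])
     (simp only: funf mult_zero_right mult_1_right add_0_right add_0_left)
lemma trip_cross: fixes w1 :: "'a::field pt" shows "trip w1 w2 w3 = dot w3 (cross w1 w2)"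
  by (rule pt_cases3[of _ w1], rule pt_cases3[of _ w2], rule pt_cases3[of _ w3])
     (simp only: funf, algebra)

lemma frame_K: assumes sf: "is_subfield K"
  and "\<And>i. cmp3 w1 i \<in> K" "\<And>i. cmp3 w2 i \<in> K" "\<And>i. cmp3 w3 i \<in> K"
  shows "frame w1 w2 w3 i j \<in> K"
proof -
  obtain a0 a1 a2 where w1: "w1 = (a0,a1,a2)" by (cases w1) auto
  obtain b0 b1 b2 where w2: "w2 = (b0,b1,b2)" by (cases w2) auto
  obtain c0 c1 c2 where w3: "w3 = (c0,c1,c2)" by (cases w3) auto
  have K: "a0 \<in> K" "a1 \<in> K" "a2 \<in> K" "b0 \<in> K" "b1 \<in> K" "b2 \<in> K" "c0 \<in> K" "c1 \<in> K" "c2 \<in> K"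
    using assms(2)[of 0] assms(2)[of 1] assms(2)[of 2] assms(3)[of 0] assms(3)[of 1] assms(3)[of 2]
      assms(4)[of 0] assms(4)[of 1] assms(4)[of 2]
    by (simp_all add: w1 w2 w3 cmp3_def)
  show ?thesis unfolding frame_def colsM_def w1 w2 w3 cross_expl cmp3_def
    using K by (auto intro!: sf_intros[OF sf])
qed

lemma qeval_comp_all: fixes c :: "nat \<Rightarrow> nat \<Rightarrow> 'a::field" shows "\<forall>q. qeval (comp c M) q = qeval c (lin M q)"
proof
  fix q show "qeval (comp c M) q = qeval c (lin M q)" by (rule pt_cases3[of _ q]) (rule qeval_comp)
qed

lemma bt_mem: "L \<in> bitangents c \<Longrightarrow> \<exists>v. L = line_set v \<and> is_bitangent c v"
  unfolding bitangents_def by blast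

lemma BTL: fixes c :: "nat \<Rightarrow> nat \<Rightarrow> 'a::field" and om :: 'a
  assumes two: "(2::'a) = 0" and om: "om^2 + om + 1 = 0"
  and L: "L \<in> bitangents c" and "U \<in> L" "V \<in> L"
  shows "Dd c U V = 0"
  using bt_mem[OF L] BT[OF two om] assms(4,5) by blast

definition img :: "(nat \<Rightarrow> nat \<Rightarrow> 'a::comm_ring_1) \<Rightarrow> 'a pt \<Rightarrow> 'a pt set" where
  "img M u = line_set (lin (tr (adj M)) u)"

lemma img_scale: fixes M :: "nat \<Rightarrow> nat \<Rightarrow> 'a::field"
  shows "k \<noteq> 0 \<Longrightarrow> img M (pt_scale k u) = img M u"
  unfolding img_def lin_scale by (rule line_set_scale)

lemma pull: fixes c :: "nat \<Rightarrow> nat \<Rightarrow> 'a::field" and om :: 'a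
  assumes two: "(2::'a) = 0" and om: "om^2 + om + 1 = 0"
  and L: "L \<in> bitangents c" and dM: "det3 M \<noteq> 0"
  shows "\<exists>u. u \<noteq> (0,0,0) \<and> L = img M u \<and> (\<forall>p. lin M p \<in> L \<longleftrightarrow> dot u p = 0) \<and>
      (\<forall>U V. dot u U = 0 \<longrightarrow> dot u V = 0 \<longrightarrow> Dd (comp c M) U V = 0)"
proof -
  obtain v where Lv: "L = line_set v" and bt: "is_bitangent c v" using bt_mem[OF L] by blast
  have v0: "v \<noteq> (0,0,0)" using bt unfolding is_bitangent_def by blast
  define u where "u = lin (tr M) v"
  have mem: "lin M p \<in> L \<longleftrightarrow> dot u p = 0" for p
    unfolding Lv u_def line_set_dot by (simp add: dot_lin)
  have "L = line_set (pt_scale (det3 M) v)" unfolding Lv using dM by (simp add: line_set_scale)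
  also have "\<dots> = img M u" unfolding img_def u_def tr_adj_lin ..
  finally have Li: "L = img M u" .
  have u0: "u \<noteq> (0,0,0)"
  proof
    assume "u = (0,0,0)"
    then have "lin (tr (adj M)) u = (0,0,0)" by (simp add: lin_def)
    then have "pt_scale (det3 M) v = (0,0,0)" unfolding u_def tr_adj_lin .
    then show False using dM v0 by (simp add: pt_scale_eq0)
  qed
  have D: "Dd (comp c M) U V = 0" if "dot u U = 0" "dot u V = 0" for U V
  proof -
    have "Dd (comp c M) U V = Dd c (lin M U) (lin M V)" by (rule D_fun[OF two om qeval_comp_all])
    also have "\<dots> = 0" using BTL[OF two om L] mem that by blast
    finally show ?thesis .
  qed
  show ?thesis using u0 Li mem D by blast
qed

lemma count_contra: fixes c :: "nat \<Rightarrow> nat \<Rightarrow> 'a::field"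
  assumes ord: "ordinary_quartic c" and sub: "bitangents c \<subseteq> img M ` S" and fin: "finite S" and cS: "card S < 7"
  shows False
proof -
  have "card (bitangents c) \<le> card (img M ` S)" by (rule card_mono) (use fin sub in auto)
  also have "\<dots> \<le> card S" by (rule card_image_le[OF fin])
  finally show False using ord cS unfolding ordinary_quartic_def by simp
qed

lemma c2num: "(2::'a::field) = 0 \<Longrightarrow> numeral (Num.Bit0 n) = (0::'a)"
  by (metis mult_2 mult_zero_left numeral_Bit0)
lemma c2num1: "(2::'a::field) = 0 \<Longrightarrow> numeral (Num.Bit1 n) = (1::'a)"
  by (metis add.commute add_0 c2num numeral_Bit1 numeral_Bit0)
lemma c2neg: "(2::'a::field) = 0 \<Longrightarrow> - (x::'a) = x"
  by (metis add_eq_0_iff mult_2 mult_zero_left)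
lemma c2minus: "(2::'a::field) = 0 \<Longrightarrow> (x::'a) - y = x + y"
  by (metis c2neg diff_conv_add_uminus)

lemmas c2s = c2num c2num1 c2neg c2minus

lemma pt_line: "pt_add (pt_scale s (x1,y1,z1)) (pt_scale t (x2,y2,z2)) = (s*x1+t*x2, s*y1+t*y2, s*z1+t*z2)"
  by (simp add: pt_add_def pt_scale_def)

lemma CQl4: fixes a :: "'a::field" assumes two: "(2::'a) = 0"
  shows "CQ a b cc d e f (pt_add (pt_scale s (1,1,0)) (pt_scale t (0,1,1))) = ((a+b+d)*s^2 + (d+e+f)*s*t + (b+cc+e)*t^2)^2"
  unfolding pt_line CQ_def prod.case
  using two by (simp add: c2s power2_eq_square power4_eq_xxxx algebra_simps)

lemma CQl5: fixes a :: "'a::field" assumes two: "(2::'a) = 0"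
  shows "CQ a b cc d e f (pt_add (pt_scale s (1,1,0)) (pt_scale t (0,0,1))) = ((a+b+d)*s^2 + (e+f+1)*s*t + cc*t^2)^2"
  unfolding pt_line CQ_def prod.case
  using two by (simp add: c2s power2_eq_square power4_eq_xxxx algebra_simps)


lemma CQl1: fixes a :: "'a::field"
  shows "CQ a b cc d e f (pt_add (pt_scale s (0,1,0)) (pt_scale t (0,0,1))) = (b*s^2 + e*s*t + cc*t^2)^2"
  unfolding pt_line CQ_def prod.case by (simp add: power2_eq_square algebra_simps)
lemma CQl2: fixes a :: "'a::field"
  shows "CQ a b cc d e f (pt_add (pt_scale s (1,0,0)) (pt_scale t (0,0,1))) = (a*s^2 + f*s*t + cc*t^2)^2"
  unfolding pt_line CQ_def prod.case by (simp add: power2_eq_square algebra_simps)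
lemma CQl3: fixes a :: "'a::field"
  shows "CQ a b cc d e f (pt_add (pt_scale s (1,0,0)) (pt_scale t (0,1,0))) = (a*s^2 + d*s*t + b*t^2)^2"
  unfolding pt_line CQ_def prod.case by (simp add: power2_eq_square algebra_simps)
lemma CQl6: fixes a :: "'a::field" assumes two: "(2::'a) = 0"
  shows "CQ a b cc d e f (pt_add (pt_scale s (1,0,0)) (pt_scale t (0,1,1))) = (a*s^2 + (d+f+1)*s*t + (b+cc+e)*t^2)^2"
  unfolding pt_line CQ_def prod.case
  using two by (simp add: c2s power2_eq_square power4_eq_xxxx algebra_simps)
lemma CQl7: fixes a :: "'a::field" assumes two: "(2::'a) = 0"
  shows "CQ a b cc d e f (pt_add (pt_scale s (1,0,1)) (pt_scale t (0,1,0))) = ((a+cc+f)*s^2 + (d+e+1)*s*t + b*t^2)^2"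
  unfolding pt_line CQ_def prod.case
  using two by (simp add: c2s power2_eq_square power4_eq_xxxx algebra_simps)

lemma line_bt: fixes c :: "nat \<Rightarrow> nat \<Rightarrow> 'a::field"
  assumes hiso: "\<forall>p. qeval c (lin M p) = lam * CQ a b cc d e f p"
    and sq: "\<forall>s t. CQ a b cc d e f (pt_add (pt_scale s P0) (pt_scale t R0)) = (g0*s^2 + g1*s*t + g2*t^2)^2"
    and g: "(g0,g1,g2) \<noteq> (0,0,0)" and sg: "\<sigma>^2 = lam" "\<sigma> \<noteq> 0" and dM: "det3 M \<noteq> 0"
    and cr: "cross P0 R0 \<noteq> (0,0,0)"
  shows "is_bitangent c (cross (lin M P0) (lin M R0))"
proof -
  let ?v = "cross (lin M P0) (lin M R0)"
  have v0: "?v \<noteq> (0,0,0)"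
  proof
    assume "?v = (0,0,0)"
    then have "lin (tr M) ?v = (0,0,0)" by (simp add: lin_def)
    then have "pt_scale (det3 M) (cross P0 R0) = (0,0,0)" unfolding cross_lin .
    then show False using dM cr by (simp add: pt_scale_eq0)
  qed
  have m1: "lin M P0 \<in> line_set ?v" unfolding line_set_dot by (simp add: dot_cross1)
  have m2: "lin M R0 \<in> line_set ?v" unfolding line_set_dot by (simp add: dot_cross2)
  have g': "(\<sigma>*g0, \<sigma>*g1, \<sigma>*g2) \<noteq> (0,0,0)" using g sg by auto
  have eq: "\<forall>s t. qeval c (pt_add (pt_scale s (lin M P0)) (pt_scale t (lin M R0)))
       = ((\<sigma>*g0) * s ^ 2 + (\<sigma>*g1) * s * t + (\<sigma>*g2) * t ^ 2) ^ 2"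
  proof (intro allI)
    fix s t
    have "qeval c (pt_add (pt_scale s (lin M P0)) (pt_scale t (lin M R0)))
        = qeval c (lin M (pt_add (pt_scale s P0) (pt_scale t R0)))" by (simp add: lin_add lin_scale)
    also have "\<dots> = lam * (g0*s^2 + g1*s*t + g2*t^2)^2" by (simp only: hiso[rule_format] sq[rule_format])
    also have "\<dots> = ((\<sigma>*g0) * s ^ 2 + (\<sigma>*g1) * s * t + (\<sigma>*g2) * t ^ 2) ^ 2"
    proof -
      have "(\<sigma>*g0) * s ^ 2 + (\<sigma>*g1) * s * t + (\<sigma>*g2) * t ^ 2 = \<sigma> * (g0*s^2 + g1*s*t + g2*t^2)"
        by (simp add: algebra_simps)
      then show ?thesis using sg(1) by (simp add: power_mult_distrib)
    qed
    finally show "qeval c (pt_add (pt_scale s (lin M P0)) (pt_scale t (lin M R0)))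
       = ((\<sigma>*g0) * s ^ 2 + (\<sigma>*g1) * s * t + (\<sigma>*g2) * t ^ 2) ^ 2" .
  qed
  show ?thesis unfolding is_bitangent_def
    using v0 m1 m2 g' eq by blast
qed

lemma lam_eq: fixes M :: "nat \<Rightarrow> nat \<Rightarrow> 'a::field"
  assumes dM: "det3 M \<noteq> 0"
    and eq: "line_set (cross (lin M P) (lin M R)) = line_set (cross (lin M P') (lin M R'))"
  shows "dot (cross P R) X = 0 \<longleftrightarrow> dot (cross P' R') X = 0"
proof -
  have "lin M X \<in> line_set (cross (lin M P) (lin M R)) \<longleftrightarrow> lin M X \<in> line_set (cross (lin M P') (lin M R'))"
    using eq by simp
  then show ?thesis unfolding line_set_dot mem_Collect_eq dot_cross_lin using dM by simp
qed

definition Ps :: "'a::comm_ring_1 pt list" where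
  "Ps = [(0,1,0),(1,0,0),(1,0,0),(1,1,0),(1,1,0),(1,0,0),(1,0,1)]"
definition Rs :: "'a::comm_ring_1 pt list" where
  "Rs = [(0,0,1),(0,0,1),(0,1,0),(0,1,1),(0,0,1),(0,1,1),(0,1,0)]"

lemma lt7: "(i::nat) < 7 \<longleftrightarrow> i = 0 \<or> i = 1 \<or> i = 2 \<or> i = 3 \<or> i = 4 \<or> i = 5 \<or> i = 6" by arith

lemma PR_dist: fixes i j :: nat
  assumes "i < 7" "j < 7"
   and h1: "dot (cross ((Ps::'a::field pt list)!i) (Rs!i)) (1,0,0) = 0 \<longleftrightarrow> dot (cross (Ps!j) (Rs!j)) (1,0,0) = 0"
   and h2: "dot (cross ((Ps::'a pt list)!i) (Rs!i)) (0,1,0) = 0 \<longleftrightarrow> dot (cross (Ps!j) (Rs!j)) (0,1,0) = 0"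
   and h3: "dot (cross ((Ps::'a pt list)!i) (Rs!i)) (0,0,1) = 0 \<longleftrightarrow> dot (cross (Ps!j) (Rs!j)) (0,0,1) = 0"
  shows "i = j"
  using assms(1,2) h1 h2 h3
  unfolding lt7 by (elim disjE) (simp_all add: Ps_def Rs_def cross_def dot_def)

lemma M9: fixes M :: "nat \<Rightarrow> nat \<Rightarrow> 'a" assumes "\<forall>i<3. \<forall>j<3. M i j \<in> K"
  shows "M 0 0 \<in> K" "M 0 1 \<in> K" "M 0 2 \<in> K" "M 1 0 \<in> K" "M 1 1 \<in> K" "M 1 2 \<in> K"
        "M 2 0 \<in> K" "M 2 1 \<in> K" "M 2 2 \<in> K"
  using assms by auto

lemma cross_lin_K: fixes M :: "nat \<Rightarrow> nat \<Rightarrow> 'a::field" assumes sf: "is_subfield K" and MK: "\<forall>i<3. \<forall>j<3. M i j \<in> K"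
  and "p1 \<in> K" "p2 \<in> K" "p3 \<in> K" "r1 \<in> K" "r2 \<in> K" "r3 \<in> K"
  shows "case cross (lin M (p1,p2,p3)) (lin M (r1,r2,r3)) of (X,Y,Z) \<Rightarrow> X \<in> K \<and> Y \<in> K \<and> Z \<in> K"
  using assms(3-) M9[OF MK] by (simp add: lin_def cross_def sf_intros[OF sf])

lemma PR_K: "i < 7 \<Longrightarrow> \<exists>p1 p2 p3 r1 r2 r3. (Ps::'a::comm_ring_1 pt list)!i = (p1,p2,p3) \<and> (Rs::'a pt list)!i = (r1,r2,r3)
   \<and> p1 \<in> {0,1} \<and> p2 \<in> {0,1} \<and> p3 \<in> {0,1} \<and> r1 \<in> {0,1} \<and> r2 \<in> {0,1} \<and> r3 \<in> {0,1}"
  unfolding lt7 by (elim disjE) (simp_all add: Ps_def Rs_def)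

lemma if_dir: fixes K :: "'a::field set" and c :: "nat \<Rightarrow> nat \<Rightarrow> 'a"
  assumes two: "(2::'a) = 0" and sf: "is_subfield K" and fin: "finite K"
    and ord: "ordinary_quartic c"
    and QQ: "in_QQ a b cc d e f" and iso: "K_iso K c (CQ a b cc d e f)"
  shows "\<forall>L\<in>bitangents c. line_over K L"
proof -
  obtain M lam where MK: "\<forall>i<3. \<forall>j<3. M i j \<in> K" and dM: "det3 M \<noteq> 0" and lamK: "lam \<in> K"
    and lam0: "lam \<noteq> 0" and hiso: "\<forall>p. qeval c (lin M p) = lam * CQ a b cc d e f p"
    using iso unfolding K_iso_def by blast
  obtain \<sigma> where sK: "\<sigma> \<in> K" and s2: "\<sigma>^2 = lam" using sqrt_K[OF sf fin two lamK] by blast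
  have s0: "\<sigma> \<noteq> 0" using s2 lam0 by auto
  have QQ': "a \<noteq> 0" "b \<noteq> 0" "cc \<noteq> 0" "a+b+d \<noteq> 0" "b+cc+e \<noteq> 0" "a+cc+f \<noteq> 0"
    using QQ unfolding in_QQ_def by auto
  define \<Lambda> where "\<Lambda> i = line_set (cross (lin M ((Ps::'a pt list)!i)) (lin M ((Rs::'a pt list)!i)))" for i
  have bt: "is_bitangent c (cross (lin M ((Ps::'a pt list)!i)) (lin M ((Rs::'a pt list)!i)))" if "i < 7" for i
  proof -
    have "i = 0 \<or> i = 1 \<or> i = 2 \<or> i = 3 \<or> i = 4 \<or> i = 5 \<or> i = 6" using that by arith
    then show ?thesis
    proof (elim disjE)
      assume i: "i = 0"
      have "is_bitangent c (cross (lin M (0,1,0)) (lin M (0,0,1)))"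
        by (rule line_bt[OF hiso _ _ s2 s0 dM]) (auto simp: CQl1 QQ' cross_def)
      then show ?thesis unfolding i by (simp add: Ps_def Rs_def)
    next
      assume i: "i = 1"
      have "is_bitangent c (cross (lin M (1,0,0)) (lin M (0,0,1)))"
        by (rule line_bt[OF hiso _ _ s2 s0 dM]) (auto simp: CQl2 QQ' cross_def)
      then show ?thesis unfolding i by (simp add: Ps_def Rs_def)
    next
      assume i: "i = 2"
      have "is_bitangent c (cross (lin M (1,0,0)) (lin M (0,1,0)))"
        by (rule line_bt[OF hiso _ _ s2 s0 dM]) (auto simp: CQl3 QQ' cross_def)
      then show ?thesis unfolding i by (simp add: Ps_def Rs_def)
    next
      assume i: "i = 3"
      have "is_bitangent c (cross (lin M (1,1,0)) (lin M (0,1,1)))"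
        by (rule line_bt[OF hiso _ _ s2 s0 dM]) (auto simp: CQl4[OF two] QQ' cross_def)
      then show ?thesis unfolding i by (simp add: Ps_def Rs_def)
    next
      assume i: "i = 4"
      have "is_bitangent c (cross (lin M (1,1,0)) (lin M (0,0,1)))"
        by (rule line_bt[OF hiso _ _ s2 s0 dM]) (auto simp: CQl5[OF two] QQ' cross_def)
      then show ?thesis unfolding i by (simp add: Ps_def Rs_def)
    next
      assume i: "i = 5"
      have "is_bitangent c (cross (lin M (1,0,0)) (lin M (0,1,1)))"
        by (rule line_bt[OF hiso _ _ s2 s0 dM]) (auto simp: CQl6[OF two] QQ' cross_def)
      then show ?thesis unfolding i by (simp add: Ps_def Rs_def)
    next
      assume i: "i = 6"
      have "is_bitangent c (cross (lin M (1,0,1)) (lin M (0,1,0)))"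
        by (rule line_bt[OF hiso _ _ s2 s0 dM]) (auto simp: CQl7[OF two] QQ' cross_def)
      then show ?thesis unfolding i by (simp add: Ps_def Rs_def)
    qed
  qed
  have sub: "\<Lambda> ` {..<7} \<subseteq> bitangents c"
  proof
    fix L assume "L \<in> \<Lambda> ` {..<7}"
    then obtain i where i: "i < 7" and L: "L = \<Lambda> i" by auto
    show "L \<in> bitangents c" unfolding bitangents_def L \<Lambda>_def using bt[OF i] by blast
  qed
  have inj: "inj_on \<Lambda> {..<7}"
  proof (rule inj_onI)
    fix i j assume i: "i \<in> {..<(7::nat)}" and j: "j \<in> {..<(7::nat)}" and eq: "\<Lambda> i = \<Lambda> j"
    have eq': "line_set (cross (lin M ((Ps::'a pt list)!i)) (lin M ((Rs::'a pt list)!i)))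
        = line_set (cross (lin M ((Ps::'a pt list)!j)) (lin M ((Rs::'a pt list)!j)))" using eq unfolding \<Lambda>_def .
    show "i = j" by (rule PR_dist) (use i j lam_eq[OF dM eq'] in auto)
  qed
  have c7: "card (\<Lambda> ` {..<7}) = 7" using card_image[OF inj] by simp
  have finb: "finite (bitangents c)" and cb: "card (bitangents c) = 7" using ord unfolding ordinary_quartic_def by auto
  have eqB: "\<Lambda> ` {..<7} = bitangents c" by (rule card_subset_eq[OF finb sub]) (simp add: c7 cb)
  show ?thesis
  proof
    fix L assume "L \<in> bitangents c"
    then obtain i where i: "i < 7" and L: "L = \<Lambda> i" using eqB by auto
    obtain p1 p2 p3 r1 r2 r3 where PR: "(Ps::'a pt list)!i = (p1,p2,p3)" "(Rs::'a pt list)!i = (r1,r2,r3)"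
      and pK: "p1 \<in> {0,1}" "p2 \<in> {0,1}" "p3 \<in> {0,1}" "r1 \<in> {0,1}" "r2 \<in> {0,1}" "r3 \<in> {0,1}"
      using PR_K[OF i] by blast
    have pK': "p1 \<in> K" "p2 \<in> K" "p3 \<in> K" "r1 \<in> K" "r2 \<in> K" "r3 \<in> K"
      using pK sf_0[OF sf] sf_1[OF sf] by auto
    obtain X Y Z where XYZ: "cross (lin M (p1,p2,p3)) (lin M (r1,r2,r3)) = (X,Y,Z)" by (cases "cross (lin M (p1,p2,p3)) (lin M (r1,r2,r3))") auto
    have inK: "X \<in> K" "Y \<in> K" "Z \<in> K" using cross_lin_K[OF sf MK pK'] XYZ by auto
    have nz: "(X,Y,Z) \<noteq> (0,0,0)" using bt[OF i] XYZ PR unfolding is_bitangent_def by auto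
    have "L = line_set (X,Y,Z)" using L XYZ PR unfolding \<Lambda>_def by simp
    then show "line_over K L" unfolding line_over_def using inK nz by blast
  qed
qed

lemma LQ3: fixes a :: "'a::field"
  assumes ac: "alg_closed TYPE('a)" and d0: "d \<noteq> 0"
  shows "\<exists>x y z. (x,y,z) \<noteq> (0,0,0) \<and> a*x+b*y+d*z = 0 \<and> s1*x^2+s2*y^2+s3*z^2+s4*x*y+s5*y*z+s6*z*x = 0"
proof -
  define S where "S x y z = s1*x^2+s2*y^2+s3*z^2+s4*x*y+s5*y*z+s6*z*x" for x y z
  show ?thesis
  proof (cases "S d 0 (-a) = 0")
    case True
    show ?thesis
    proof (intro exI conjI)
      show "(d, 0, -a) \<noteq> (0,0,0)" using d0 by simp
      show "a*d+b*0+d*(-a) = 0" by algebra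
      show "s1*d^2+s2*0^2+s3*(-a)^2+s4*d*0+s5*0*(-a)+s6*(-a)*d = 0" using True unfolding S_def .
    qed
  next
    case False
    define B where "B = 2*s1*d*0 + 2*s2*0*d + 2*s3*a*b + s4*d*d + s5*(0*(-b) + (-a)*d) + s6*(d*(-b))"
    obtain X where X: "S d 0 (-a) * X^2 + B * X + S 0 d (-b) = 0" using quad_root[OF ac False] by blast
    have "S (X*d) d (-X*a-b) = S d 0 (-a) * X^2 + B * X + S 0 d (-b)" unfolding B_def S_def by (simp add: power2_eq_square algebra_simps)
    then have e: "S (X*d) d (-X*a-b) = 0" using X by simp
    show ?thesis
    proof (intro exI conjI)
      show "(X*d, d, -X*a-b) \<noteq> (0,0,0)" using d0 by simp
      show "a*(X*d)+b*d+d*(-X*a-b) = 0" by algebra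
      show "s1*(X*d)^2+s2*d^2+s3*(-X*a-b)^2+s4*(X*d)*d+s5*d*(-X*a-b)+s6*(-X*a-b)*(X*d) = 0"
        using e unfolding S_def .
    qed
  qed
qed

lemma LQ: fixes a :: "'a::field"
  assumes ac: "alg_closed TYPE('a)"
  shows "\<exists>x y z. (x,y,z) \<noteq> (0,0,0) \<and> a*x+b*y+d*z = 0 \<and> s1*x^2+s2*y^2+s3*z^2+s4*x*y+s5*y*z+s6*z*x = 0"
proof -
  consider "d \<noteq> 0" | "d = 0" "b \<noteq> 0" | "d = 0" "b = 0" "a \<noteq> 0" | "a = 0" "b = 0" "d = 0" by blast
  then show ?thesis
  proof cases
    case 1 then show ?thesis by (rule LQ3[OF ac])
  next
    case 2
    obtain x z y where h: "(x,z,y) \<noteq> (0,0,0)" "a*x+d*z+b*y = 0" "s1*x^2+s3*z^2+s2*y^2+s6*x*z+s5*z*y+s4*y*x = 0"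
      using LQ3[OF ac 2(2), of a d s1 s3 s2 s6 s5 s4] by blast
    show ?thesis
    proof (intro exI conjI)
      show "(x,y,z) \<noteq> (0,0,0)" using h(1) by auto
      show "a*x+b*y+d*z = 0" using h(2) by (simp add: ac_simps)
      show "s1*x^2+s2*y^2+s3*z^2+s4*x*y+s5*y*z+s6*z*x = 0" using h(3) by (simp add: ac_simps)
    qed
  next
    case 3
    obtain z y x where h: "(z,y,x) \<noteq> (0,0,0)" "d*z+b*y+a*x = 0" "s3*z^2+s2*y^2+s1*x^2+s5*z*y+s4*y*x+s6*x*z = 0"
      using LQ3[OF ac 3(3), of d b s3 s2 s1 s5 s4 s6] by blast
    show ?thesis
    proof (intro exI conjI)
      show "(x,y,z) \<noteq> (0,0,0)" using h(1) by auto
      show "a*x+b*y+d*z = 0" using h(2) by (simp add: ac_simps)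
      show "s1*x^2+s2*y^2+s3*z^2+s4*x*y+s5*y*z+s6*z*x = 0" using h(3) by (simp add: ac_simps)
    qed
  next
    case 4
    obtain x y z where h: "(x,y,z) \<noteq> (0,0,0)" "0*x+0*y+1*z = 0" "s1*x^2+s2*y^2+s3*z^2+s4*x*y+s5*y*z+s6*z*x = 0"
      using LQ3[OF ac one_neq_zero, of 0 0] by blast
    show ?thesis
    proof (intro exI conjI)
      show "(x,y,z) \<noteq> (0,0,0)" using h(1) by auto
      show "a*x+b*y+d*z = 0" using 4 by simp
      show "s1*x^2+s2*y^2+s3*z^2+s4*x*y+s5*y*z+s6*z*x = 0" using h(3) .
    qed
  qed
qed

lemma sf_of_nat: "is_subfield K \<Longrightarrow> of_nat n \<in> K"
  by (induction n) (auto intro: sf_intros)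
lemma sf_numeral: "is_subfield K \<Longrightarrow> numeral n \<in> K"
  using sf_of_nat[of K "numeral n"] by simp

lemma comp_K: fixes c :: "nat \<Rightarrow> nat \<Rightarrow> 'a::field"
  assumes sf: "is_subfield K" and cK: "\<forall>i j. i + j \<le> 4 \<longrightarrow> c i j \<in> K" and MK: "\<forall>i<3. \<forall>j<3. M i j \<in> K"
  shows "comp c M i j \<in> K"
proof -
  have c: "c 0 0 \<in> K" "c 0 1 \<in> K" "c 0 2 \<in> K" "c 0 3 \<in> K" "c 0 4 \<in> K" "c 1 0 \<in> K" "c 1 1 \<in> K" "c 1 2 \<in> K"
    "c 1 3 \<in> K" "c 2 0 \<in> K" "c 2 1 \<in> K" "c 2 2 \<in> K" "c 3 0 \<in> K" "c 3 1 \<in> K" "c 4 0 \<in> K" using cK by auto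
  note m = M9[OF MK]
  have I: "x \<in> K \<Longrightarrow> y \<in> K \<Longrightarrow> x + y \<in> K" "x \<in> K \<Longrightarrow> y \<in> K \<Longrightarrow> x * y \<in> K" "x \<in> K \<Longrightarrow> x ^ n \<in> K"
     "numeral k \<in> K" "0 \<in> K" for x y n k
    using sf by (auto intro: sf_intros sf_numeral)
  have ifI: "(Q \<Longrightarrow> x \<in> K) \<Longrightarrow> (\<not> Q \<Longrightarrow> y \<in> K) \<Longrightarrow> (if Q then x else y) \<in> K" for Q x y
    by auto
  show ?thesis unfolding comp_def
    by (intro ifI I c m)
qed
lemma frame_BT1: fixes c :: "nat \<Rightarrow> nat \<Rightarrow> 'a::field" and om :: 'a
  assumes two: "(2::'a) = 0" and om: "om^2 + om + 1 = 0"
    and L: "line_set w1 \<in> bitangents c"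
  shows "Dd (comp c (frame w1 w2 w3)) (0,y,z) (0,y',z') = 0"
proof -
  have "Dd (comp c (frame w1 w2 w3)) (0,y,z) (0,y',z') = Dd c (lin (frame w1 w2 w3) (0,y,z)) (lin (frame w1 w2 w3) (0,y',z'))"
    by (rule D_fun[OF two om qeval_comp_all])
  also have "\<dots> = 0" by (rule BTL[OF two om L]) (simp_all add: line_set_dot frame_dot1)
  finally show ?thesis .
qed
lemma frame_BT2: fixes c :: "nat \<Rightarrow> nat \<Rightarrow> 'a::field" and om :: 'a
  assumes two: "(2::'a) = 0" and om: "om^2 + om + 1 = 0"
    and L: "line_set w2 \<in> bitangents c"
  shows "Dd (comp c (frame w1 w2 w3)) (x,0,z) (x',0,z') = 0"
proof -
  have "Dd (comp c (frame w1 w2 w3)) (x,0,z) (x',0,z') = Dd c (lin (frame w1 w2 w3) (x,0,z)) (lin (frame w1 w2 w3) (x',0,z'))"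
    by (rule D_fun[OF two om qeval_comp_all])
  also have "\<dots> = 0" by (rule BTL[OF two om L]) (simp_all add: line_set_dot frame_dot2)
  finally show ?thesis .
qed
lemma frame_BT3: fixes c :: "nat \<Rightarrow> nat \<Rightarrow> 'a::field" and om :: 'a
  assumes two: "(2::'a) = 0" and om: "om^2 + om + 1 = 0"
    and L: "line_set w3 \<in> bitangents c"
  shows "Dd (comp c (frame w1 w2 w3)) (x,y,0) (x',y',0) = 0"
proof -
  have "Dd (comp c (frame w1 w2 w3)) (x,y,0) (x',y',0) = Dd c (lin (frame w1 w2 w3) (x,y,0)) (lin (frame w1 w2 w3) (x',y',0))"
    by (rule D_fun[OF two om qeval_comp_all])
  also have "\<dots> = 0" by (rule BTL[OF two om L]) (simp_all add: line_set_dot frame_dot3)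
  finally show ?thesis .
qed

lemma coef_x0: "Dd c (0,1,0) (0,0,1) = c 0 3" "Dd c (0,0,1) (0,1,0) = c 0 1"
  by (simp_all add: Dd_def qdx_expl qdy_expl qdz_expl)
lemma coef_y0: "Dd c (1,0,0) (0,0,1) = c 3 0" "Dd c (0,0,1) (1,0,0) = c 1 0"
  by (simp_all add: Dd_def qdx_expl qdy_expl qdz_expl)
lemma coef_z0: "Dd c (1,0,0) (0,1,0) = c 3 1" "Dd c (0,1,0) (1,0,0) = c 1 3"
  by (simp_all add: Dd_def qdx_expl qdy_expl qdz_expl)

lemma structB: fixes e :: "nat \<Rightarrow> nat \<Rightarrow> 'a::field"
  assumes two: "(2::'a) = 0"
    and z: "e 0 3 = 0" "e 0 1 = 0" "e 3 0 = 0" "e 1 0 = 0" "e 3 1 = 0" "e 1 3 = 0"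
    and sq: "e 4 0 = r40^2" "e 0 4 = r04^2" "e 0 0 = r00^2" "e 2 2 = r22^2" "e 0 2 = r02^2" "e 2 0 = r20^2"
  shows "qeval e (x,y,z) = (r40*x^2 + r04*y^2 + r00*z^2 + r22*x*y + r02*y*z + r20*z*x)^2 + x*y*z*(e 2 1*x + e 1 2*y + e 1 1*z)"
    and "qdx e (x,y,z) = e 1 2*y^2*z + e 1 1*y*z^2"
    and "qdy e (x,y,z) = e 2 1*x^2*z + e 1 1*x*z^2"
    and "qdz e (x,y,z) = e 2 1*x^2*y + e 1 2*x*y^2"
  by (simp_all only: qeval_expl qdx_expl qdy_expl qdz_expl z sq)
     (use two in \<open>simp_all add: c2s power2_eq_square power3_eq_cube power4_eq_xxxx algebra_simps\<close>)

lemma structA: fixes e :: "nat \<Rightarrow> nat \<Rightarrow> 'a::field"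
  assumes two: "(2::'a) = 0"
    and z: "e 0 3 = 0" "e 0 1 = 0" "e 3 0 = 0" "e 1 0 = 0" "e 2 1 = 0" "e 1 2 = 0"
    and sq: "e 4 0 = r40^2" "e 0 4 = r04^2" "e 0 0 = r00^2" "e 2 2 = r22^2" "e 0 2 = r02^2" "e 2 0 = r20^2"
       "e 3 1 = r31^2" "e 1 3 = r13^2" "e 1 1 = r11^2"
  shows "qeval e (x,y,z) = (r40*x^2 + r04*y^2 + r00*z^2 + r22*x*y + r02*y*z + r20*z*x)^2 + x*y*(r31*x + r13*y + r11*z)^2"
    and "qdx e (x,y,z) = y*(r31*x + r13*y + r11*z)^2"
    and "qdy e (x,y,z) = x*(r31*x + r13*y + r11*z)^2"
    and "qdz e (x,y,z) = 0"
  by (simp_all only: qeval_expl qdx_expl qdy_expl qdz_expl z sq)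
     (use two in \<open>simp_all add: c2s power2_eq_square power3_eq_cube power4_eq_xxxx algebra_simps\<close>)

lemma sqrt_ex: assumes "alg_closed TYPE('a::field)" shows "\<exists>r::'a. r^2 = x"
proof -
  obtain X :: 'a where "1*X^2 + 0*X + (-x) = 0" using quad_root[OF assms, of 1 0 "-x"] by auto
  then show ?thesis by (intro exI[of _ X]) (simp add: algebra_simps)
qed

lemma ns_point: "nonsingular_quartic e \<Longrightarrow> p \<noteq> (0,0,0) \<Longrightarrow> qeval e p = 0 \<Longrightarrow> qdx e p = 0 \<Longrightarrow> qdy e p = 0 \<Longrightarrow> qdz e p = 0 \<Longrightarrow> False"
  unfolding nonsingular_quartic_def by blast

lemma classA: fixes u1 :: "'a::field"
  assumes u0: "(u1,u2,0) \<noteq> (0,0,0)" and h: "u1*u2*(e12*u1 - e21*u2) = 0" and ne: "e21 \<noteq> 0 \<or> e12 \<noteq> 0"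
  shows "\<exists>k u0. k \<noteq> 0 \<and> u0 \<in> {(1,0,0),(0,1,0),(e21,e12,0)} \<and> (u1,u2,0) = pt_scale k u0"
proof (cases "u1 = 0")
  case True
  then have "u2 \<noteq> 0" using u0 by auto
  then show ?thesis using True by (intro exI[of _ u2] exI[of _ "(0,1,0)"]) (simp add: pt_scale_def)
next
  case False
  show ?thesis
  proof (cases "u2 = 0")
    case True
    then show ?thesis using False by (intro exI[of _ u1] exI[of _ "(1,0,0)"]) (simp add: pt_scale_def)
  next
    case False2: False
    then have r: "e12*u1 = e21*u2" using h False by simp
    have e21: "e21 \<noteq> 0" using r ne False False2 by auto
    show ?thesis using False e21 r
      by (intro exI[of _ "u1/e21"] exI[of _ "(e21,e12,0)"]) (auto simp: pt_scale_def field_simps)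
  qed
qed

lemma card3: "card {a, b, c} < 7" 
  by (rule le_less_trans[OF card_insert_le_m1[of 3]]) (auto intro: le_trans[OF card_insert_le_m1] simp: card_insert_le_m1)

lemma stepA: fixes c :: "nat \<Rightarrow> nat \<Rightarrow> 'a::field" and om :: 'a
  assumes two: "(2::'a) = 0" and om: "om^2 + om + 1 = 0" and ac: "alg_closed TYPE('a)"
    and ns: "nonsingular_quartic c" and ord: "ordinary_quartic c"
    and L1: "line_set w1 \<in> bitangents c" and L2: "line_set w2 \<in> bitangents c"
    and cr: "cross w1 w2 \<noteq> (0,0,0)"
  shows "\<exists>L\<in>bitangents c. cross w1 w2 \<notin> L"
proof -
  obtain n1 n2 n3 where n: "cross w1 w2 = (n1,n2,n3)" by (cases "cross w1 w2") auto
  obtain w3 where w3: "dot w3 (cross w1 w2) \<noteq> 0"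
  proof -
    consider "n1 \<noteq> 0" | "n2 \<noteq> 0" | "n3 \<noteq> 0" using cr n by auto
    then show ?thesis
    proof cases
      case 1 then show ?thesis using that[of "(1,0,0)"] n by (simp add: dot_def)
    next
      case 2 then show ?thesis using that[of "(0,1,0)"] n by (simp add: dot_def)
    next
      case 3 then show ?thesis using that[of "(0,0,1)"] n by (simp add: dot_def)
    qed
  qed
  define M where "M = frame w1 w2 w3"
  define c' where "c' = comp c M"
  have d0: "trip w1 w2 w3 \<noteq> 0" using w3 trip_cross by metis
  have dM: "det3 M \<noteq> 0" unfolding M_def frame_det using d0 by simp
  have nsc: "nonsingular_quartic c'" unfolding c'_def by (rule NS_comp[OF two om qeval_comp_all dM ns])
  have z1: "c' 0 3 = 0" using frame_BT1[OF two om L1, of w2 w3 1 0 0 1] coef_x0(1)[of c'] unfolding c'_def M_def by simp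
  have z2: "c' 0 1 = 0" using frame_BT1[OF two om L1, of w2 w3 0 1 1 0] coef_x0(2)[of c'] unfolding c'_def M_def by simp
  have z3: "c' 3 0 = 0" using frame_BT2[OF two om L2, of w1 w3 1 0 0 1] coef_y0(1)[of c'] unfolding c'_def M_def by simp
  have z4: "c' 1 0 = 0" using frame_BT2[OF two om L2, of w1 w3 0 1 1 0] coef_y0(2)[of c'] unfolding c'_def M_def by simp
  have ne: "c' 2 1 \<noteq> 0 \<or> c' 1 2 \<noteq> 0"
  proof (rule ccontr)
    assume "\<not> (c' 2 1 \<noteq> 0 \<or> c' 1 2 \<noteq> 0)"
    then have z5: "c' 2 1 = 0" "c' 1 2 = 0" by auto
    obtain r40 where r40: "c' 4 0 = r40^2" using sqrt_ex[OF ac] by metis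
    obtain r04 where r04: "c' 0 4 = r04^2" using sqrt_ex[OF ac] by metis
    obtain r00 where r00: "c' 0 0 = r00^2" using sqrt_ex[OF ac] by metis
    obtain r22 where r22: "c' 2 2 = r22^2" using sqrt_ex[OF ac] by metis
    obtain r02 where r02: "c' 0 2 = r02^2" using sqrt_ex[OF ac] by metis
    obtain r20 where r20: "c' 2 0 = r20^2" using sqrt_ex[OF ac] by metis
    obtain r31 where r31: "c' 3 1 = r31^2" using sqrt_ex[OF ac] by metis
    obtain r13 where r13: "c' 1 3 = r13^2" using sqrt_ex[OF ac] by metis
    obtain r11 where r11: "c' 1 1 = r11^2" using sqrt_ex[OF ac] by metis
    note st = structA[OF two z1 z2 z3 z4 z5 r40 r04 r00 r22 r02 r20 r31 r13 r11]
    obtain x y z where p0: "(x,y,z) \<noteq> (0,0,0)" and l: "r31*x+r13*y+r11*z = 0"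
      and S: "r40*x^2+r04*y^2+r00*z^2+r22*x*y+r02*y*z+r20*z*x = 0"
      using LQ[OF ac, of r31 r13 r11 r40 r04 r00 r22 r02 r20] by blast
    show False using ns_point[OF nsc p0] st l S by simp
  qed
  show ?thesis
  proof (rule ccontr)
    assume H: "\<not> (\<exists>L\<in>bitangents c. cross w1 w2 \<notin> L)"
    have sub: "bitangents c \<subseteq> img M ` {(1,0,0),(0,1,0),(c' 2 1, c' 1 2, 0)}"
    proof
      fix L assume L: "L \<in> bitangents c"
      obtain u where u0: "u \<noteq> (0,0,0)" and Lu: "L = img M u" and mem: "\<forall>p. lin M p \<in> L \<longleftrightarrow> dot u p = 0"
        and D: "\<forall>U V. dot u U = 0 \<longrightarrow> dot u V = 0 \<longrightarrow> Dd (comp c M) U V = 0"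
        using pull[OF two om L dM] by blast
      obtain u1 u2 u3 where u: "u = (u1,u2,u3)" by (cases u) auto
      have "lin M (0,0,1) \<in> L" unfolding M_def frame_e3 using H L by blast
      then have u3: "u3 = 0" using mem u by (simp add: dot_def)
      have "Dd c' (u2, -u1, 0) (0,0,1) = 0" unfolding c'_def using D u u3 by (simp add: dot_def algebra_simps)
      then have "qdz c' (u2, -u1, 0) = 0" by (simp add: Dd_e3)
      then have "c' 1 2 * u2 * u1^2 - c' 2 1 * u2^2 * u1 = 0" using z1 z3 by (simp add: qdz_expl power2_eq_square power3_eq_cube)
      then have "u1*u2*(c' 1 2*u1 - c' 2 1*u2) = 0" by (simp add: power2_eq_square algebra_simps)
      then obtain k u' where k: "k \<noteq> 0" "u' \<in> {(1,0,0),(0,1,0),(c' 2 1, c' 1 2, 0)}" "(u1,u2,0) = pt_scale k u'"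
        using classA[of u1 u2 "c' 1 2" "c' 2 1"] u0 u u3 ne by auto
      have "L = img M u'" using Lu u u3 k img_scale by metis
      then show "L \<in> img M ` {(1,0,0),(0,1,0),(c' 2 1, c' 1 2, 0)}" using k by blast
    qed
    show False by (rule count_contra[OF ord sub]) (auto simp: card3)
  qed
qed

lemma classB: fixes u1 :: "'a::field"
  assumes u0: "(u1,u2,u3) \<noteq> (0,0,0)"
    and C1: "u2 = 0 \<or> u3 = 0 \<or> g*u2 = b*u3"
    and C2: "u1 = 0 \<or> u3 = 0 \<or> g*u1 = a*u3"
    and C3: "u1 = 0 \<or> u2 = 0 \<or> b*u1 = a*u2"
    and one: "(a = 0 \<and> b \<noteq> 0 \<and> g \<noteq> 0) \<or> (b = 0 \<and> a \<noteq> 0 \<and> g \<noteq> 0) \<or> (g = 0 \<and> a \<noteq> 0 \<and> b \<noteq> 0)"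
  shows "\<exists>k u. k \<noteq> 0 \<and> u \<in> {(1,0,0),(0,1,0),(0,0,1),(a,b,g)} \<and> (u1,u2,u3) = pt_scale k u"
proof -
  have e1: ?thesis if "u2 = 0" "u3 = 0"
    using that u0 by (intro exI[of _ u1] exI[of _ "(1,0,0)"]) (auto simp: pt_scale_def)
  have e2: ?thesis if "u1 = 0" "u3 = 0"
    using that u0 by (intro exI[of _ u2] exI[of _ "(0,1,0)"]) (auto simp: pt_scale_def)
  have e3: ?thesis if "u1 = 0" "u2 = 0"
    using that u0 by (intro exI[of _ u3] exI[of _ "(0,0,1)"]) (auto simp: pt_scale_def)
  consider "a = 0" "b \<noteq> 0" "g \<noteq> 0" | "b = 0" "a \<noteq> 0" "g \<noteq> 0" | "g = 0" "a \<noteq> 0" "b \<noteq> 0" using one by blast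
  then show ?thesis
  proof cases
    case 1
    have h2: "u1 = 0 \<or> u3 = 0" using C2 1 by auto
    have h3: "u1 = 0 \<or> u2 = 0" using C3 1 by auto
    show ?thesis
    proof (cases "u1 = 0")
      case False then show ?thesis using h2 h3 e1 by auto
    next
      case True
      show ?thesis
      proof (cases "u2 = 0 \<or> u3 = 0")
        case True2: True then show ?thesis using True e2 e3 by auto
      next
        case False
        then have r: "g*u2 = b*u3" and n2: "u2 \<noteq> 0" using C1 by auto
        show ?thesis using True r n2 1
          by (intro exI[of _ "u2/b"] exI[of _ "(a,b,g)"]) (auto simp: pt_scale_def field_simps)
      qed
    qed
  next
    case 2
    have h1: "u2 = 0 \<or> u3 = 0" using C1 2 by auto
    have h3: "u1 = 0 \<or> u2 = 0" using C3 2 by auto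
    show ?thesis
    proof (cases "u2 = 0")
      case False then show ?thesis using h1 h3 e2 by auto
    next
      case True
      show ?thesis
      proof (cases "u1 = 0 \<or> u3 = 0")
        case True2: True then show ?thesis using True e1 e3 by auto
      next
        case False
        then have r: "g*u1 = a*u3" and n1: "u1 \<noteq> 0" using C2 by auto
        show ?thesis using True r n1 2
          by (intro exI[of _ "u1/a"] exI[of _ "(a,b,g)"]) (auto simp: pt_scale_def field_simps)
      qed
    qed
  next
    case 3
    have h1: "u2 = 0 \<or> u3 = 0" using C1 3 by auto
    have h2: "u1 = 0 \<or> u3 = 0" using C2 3 by auto
    show ?thesis
    proof (cases "u3 = 0")
      case False then show ?thesis using h1 h2 e3 by auto
    next
      case True
      show ?thesis
      proof (cases "u1 = 0 \<or> u2 = 0")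
        case True2: True then show ?thesis using True e1 e2 by auto
      next
        case False
        then have r: "b*u1 = a*u2" and n1: "u1 \<noteq> 0" using C3 by auto
        show ?thesis using True r n1 3
          by (intro exI[of _ "u1/a"] exI[of _ "(a,b,g)"]) (auto simp: pt_scale_def field_simps)
      qed
    qed
  qed
qed

lemma card4: "card {a, b, c, d} < 7"
proof -
  have "card {a, b, c, d} \<le> 4" by (rule le_trans[OF card_insert_le_m1]) (auto intro: le_trans[OF card_insert_le_m1] simp: card_insert_le_m1)
  then show ?thesis by simp
qed


lemma stepB: fixes c :: "nat \<Rightarrow> nat \<Rightarrow> 'a::field" and om :: 'a and K :: "'a set"
  assumes two: "(2::'a) = 0" and om: "om^2 + om + 1 = 0" and ac: "alg_closed TYPE('a)"
    and sf: "is_subfield K" and fin: "finite K"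
    and cK: "\<forall>i j. i + j \<le> 4 \<longrightarrow> c i j \<in> K"
    and ns: "nonsingular_quartic c" and ord: "ordinary_quartic c"
    and L1: "line_set w1 \<in> bitangents c" and L2: "line_set w2 \<in> bitangents c" and L3: "line_set w3 \<in> bitangents c"
    and w1K: "\<And>i. cmp3 w1 i \<in> K" and w2K: "\<And>i. cmp3 w2 i \<in> K" and w3K: "\<And>i. cmp3 w3 i \<in> K"
    and d0: "trip w1 w2 w3 \<noteq> 0"
  shows "\<exists>a b cc d e f. a \<in> K \<and> b \<in> K \<and> cc \<in> K \<and> d \<in> K \<and> e \<in> K \<and> f \<in> K \<and>
            in_QQ a b cc d e f \<and> K_iso K c (CQ a b cc d e f)"
proof -
  define M where "M = frame w1 w2 w3"
  define c' where "c' = comp c M"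
  have MK: "\<forall>i<3. \<forall>j<3. M i j \<in> K" unfolding M_def using frame_K[OF sf w1K w2K w3K] by blast
  have dM: "det3 M \<noteq> 0" unfolding M_def frame_det using d0 by simp
  have c'K: "c' i j \<in> K" for i j unfolding c'_def by (rule comp_K[OF sf cK MK])
  have nsc: "nonsingular_quartic c'" unfolding c'_def by (rule NS_comp[OF two om qeval_comp_all dM ns])
  have qc: "\<forall>q. qeval c (lin M q) = qeval c' q" unfolding c'_def using qeval_comp_all by metis
  have z1: "c' 0 3 = 0" using frame_BT1[OF two om L1, of w2 w3 1 0 0 1] coef_x0(1)[of c'] unfolding c'_def M_def by simp
  have z2: "c' 0 1 = 0" using frame_BT1[OF two om L1, of w2 w3 0 1 1 0] coef_x0(2)[of c'] unfolding c'_def M_def by simp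
  have z3: "c' 3 0 = 0" using frame_BT2[OF two om L2, of w1 w3 1 0 0 1] coef_y0(1)[of c'] unfolding c'_def M_def by simp
  have z4: "c' 1 0 = 0" using frame_BT2[OF two om L2, of w1 w3 0 1 1 0] coef_y0(2)[of c'] unfolding c'_def M_def by simp
  have z5: "c' 3 1 = 0" using frame_BT3[OF two om L3, of w1 w2 1 0 0 1] coef_z0(1)[of c'] unfolding c'_def M_def by simp
  have z6: "c' 1 3 = 0" using frame_BT3[OF two om L3, of w1 w2 0 1 1 0] coef_z0(2)[of c'] unfolding c'_def M_def by simp
  obtain r40 where r40K: "r40 \<in> K" and r40: "c' 4 0 = r40^2" using sqrt_K[OF sf fin two c'K] by metis
  obtain r04 where r04K: "r04 \<in> K" and r04: "c' 0 4 = r04^2" using sqrt_K[OF sf fin two c'K] by metis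
  obtain r00 where r00K: "r00 \<in> K" and r00: "c' 0 0 = r00^2" using sqrt_K[OF sf fin two c'K] by metis
  obtain r22 where r22K: "r22 \<in> K" and r22: "c' 2 2 = r22^2" using sqrt_K[OF sf fin two c'K] by metis
  obtain r02 where r02K: "r02 \<in> K" and r02: "c' 0 2 = r02^2" using sqrt_K[OF sf fin two c'K] by metis
  obtain r20 where r20K: "r20 \<in> K" and r20: "c' 2 0 = r20^2" using sqrt_K[OF sf fin two c'K] by metis
  note st = structB[OF two z1 z2 z3 z4 z5 z6 r40 r04 r00 r22 r02 r20]
  define A where "A = c' 2 1"
  define B where "B = c' 1 2"
  define G where "G = c' 1 1"
  note st' = st[folded A_def B_def G_def]
  have AK: "A \<in> K" "B \<in> K" "G \<in> K" unfolding A_def B_def G_def using c'K by auto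
  have sAB: "\<not> (A = 0 \<and> B = 0)"
  proof
    assume h: "A = 0 \<and> B = 0"
    obtain x y z where p0: "(x,y,z) \<noteq> (0,0,0)" and l: "0*x+0*y+1*z = 0"
      and S: "r40*x^2+r04*y^2+r00*z^2+r22*x*y+r02*y*z+r20*z*x = 0"
      using LQ[OF ac, of 0 0 1 r40 r04 r00 r22 r02 r20] by blast
    show False using ns_point[OF nsc p0] st' l S h by simp
  qed
  have sAG: "\<not> (A = 0 \<and> G = 0)"
  proof
    assume h: "A = 0 \<and> G = 0"
    obtain x y z where p0: "(x,y,z) \<noteq> (0,0,0)" and l: "0*x+1*y+0*z = 0"
      and S: "r40*x^2+r04*y^2+r00*z^2+r22*x*y+r02*y*z+r20*z*x = 0"
      using LQ[OF ac, of 0 1 0 r40 r04 r00 r22 r02 r20] by blast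
    show False using ns_point[OF nsc p0] st' l S h by simp
  qed
  have sBG: "\<not> (B = 0 \<and> G = 0)"
  proof
    assume h: "B = 0 \<and> G = 0"
    obtain x y z where p0: "(x,y,z) \<noteq> (0,0,0)" and l: "1*x+0*y+0*z = 0"
      and S: "r40*x^2+r04*y^2+r00*z^2+r22*x*y+r02*y*z+r20*z*x = 0"
      using LQ[OF ac, of 1 0 0 r40 r04 r00 r22 r02 r20] by blast
    show False using ns_point[OF nsc p0] st' l S h by simp
  qed
  have nz: "A \<noteq> 0 \<and> B \<noteq> 0 \<and> G \<noteq> 0"
  proof (rule ccontr)
    assume "\<not> (A \<noteq> 0 \<and> B \<noteq> 0 \<and> G \<noteq> 0)"
    then have one: "(A = 0 \<and> B \<noteq> 0 \<and> G \<noteq> 0) \<or> (B = 0 \<and> A \<noteq> 0 \<and> G \<noteq> 0) \<or> (G = 0 \<and> A \<noteq> 0 \<and> B \<noteq> 0)"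
      using sAB sAG sBG by blast
    have sub: "bitangents c \<subseteq> img M ` {(1,0,0),(0,1,0),(0,0,1),(A,B,G)}"
    proof
      fix L assume L: "L \<in> bitangents c"
      obtain u where u0: "u \<noteq> (0,0,0)" and Lu: "L = img M u"
        and D: "\<forall>U V. dot u U = 0 \<longrightarrow> dot u V = 0 \<longrightarrow> Dd (comp c M) U V = 0"
        using pull[OF two om L dM] by blast
      obtain u1 u2 u3 where u: "u = (u1,u2,u3)" by (cases u) auto
      have a1: "dot u (0,u3,-u2) = 0" "dot u (u3,0,-u1) = 0" "dot u (u2,-u1,0) = 0"
        unfolding u dot_def by (simp_all add: algebra_simps)
      have D12: "Dd c' (0,u3,-u2) (u3,0,-u1) = 0" using D a1 unfolding c'_def by blast
      have D21: "Dd c' (u3,0,-u1) (0,u3,-u2) = 0" using D a1 unfolding c'_def by blast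
      have D31: "Dd c' (u2,-u1,0) (0,u3,-u2) = 0" using D a1 unfolding c'_def by blast
      have E1: "u2*u3^2*(G*u2 - B*u3) = 0"
      proof -
        have "Dd c' (0,u3,-u2) (u3,0,-u1) = u2*u3^2*(G*u2 - B*u3)"
          unfolding Dd_def prod.case st' by (simp add: algebra_simps power2_eq_square power3_eq_cube)
        then show ?thesis using D12 by simp
      qed
      have E2: "u1*u3^2*(G*u1 - A*u3) = 0"
      proof -
        have "Dd c' (u3,0,-u1) (0,u3,-u2) = u1*u3^2*(G*u1 - A*u3)"
          unfolding Dd_def prod.case st' by (simp add: algebra_simps power2_eq_square power3_eq_cube)
        then show ?thesis using D21 by simp
      qed
      have E3: "u1*u2^2*(A*u2 - B*u1) = 0"
      proof -
        have "Dd c' (u2,-u1,0) (0,u3,-u2) = u1*u2^2*(A*u2 - B*u1)"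
          unfolding Dd_def prod.case st' by (simp add: algebra_simps power2_eq_square power3_eq_cube)
        then show ?thesis using D31 by simp
      qed
      have C1: "u2 = 0 \<or> u3 = 0 \<or> G*u2 = B*u3" using E1 by auto
      have C2: "u1 = 0 \<or> u3 = 0 \<or> G*u1 = A*u3" using E2 by auto
      have C3: "u1 = 0 \<or> u2 = 0 \<or> B*u1 = A*u2" using E3 by auto
      obtain k u' where k: "k \<noteq> 0" "u' \<in> {(1,0,0),(0,1,0),(0,0,1),(A,B,G)}" "(u1,u2,u3) = pt_scale k u'"
        using classB[OF _ C1 C2 C3 one] u0 u by blast
      have "L = img M u'" using Lu u k img_scale by metis
      then show "L \<in> img M ` {(1,0,0),(0,1,0),(0,0,1),(A,B,G)}" using k by blast
    qed
    show False by (rule count_contra[OF ord sub]) (auto simp: card4)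
  qed
  have A0: "A \<noteq> 0" and B0: "B \<noteq> 0" and G0: "G \<noteq> 0" using nz by auto
  define \<kappa> where "\<kappa> = A^3*B^3*G^3"
  have \<kappa>K: "\<kappa> \<in> K" unfolding \<kappa>_def using AK by (auto intro!: sf_intros[OF sf])
  have \<kappa>0: "\<kappa> \<noteq> 0" unfolding \<kappa>_def using A0 B0 G0 by simp
  obtain \<sigma> where \<sigma>K: "\<sigma> \<in> K" and \<sigma>2: "\<sigma>^2 = \<kappa>" using sqrt_K[OF sf fin two \<kappa>K] by blast
  have \<sigma>0: "\<sigma> \<noteq> 0" using \<sigma>2 \<kappa>0 by auto
  define \<tau> where "\<tau> = 1 / \<sigma>"
  have \<tau>K: "\<tau> \<in> K" unfolding \<tau>_def using \<sigma>K sf by (auto intro!: sf_intros[OF sf])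
  have st1: "\<sigma> * \<tau> = 1" unfolding \<tau>_def using \<sigma>0 by simp
  define qa where "qa = \<tau>*r40*(B*G)^2"
  define qb where "qb = \<tau>*r04*(A*G)^2"
  define qc where "qc = \<tau>*r00*(A*B)^2"
  define qd where "qd = \<tau>*r22*(B*G)*(A*G)"
  define qe where "qe = \<tau>*r02*(A*G)*(A*B)"
  define qf where "qf = \<tau>*r20*(A*B)*(B*G)"
  have qK: "qa \<in> K" "qb \<in> K" "qc \<in> K" "qd \<in> K" "qe \<in> K" "qf \<in> K"
    unfolding qa_def qb_def qc_def qd_def qe_def qf_def
    using AK \<tau>K r40K r04K r00K r22K r02K r20K by (auto intro!: sf_intros[OF sf])
  have Sfac: "r40*(B*G*x)^2 + r04*(A*G*y)^2 + r00*(A*B*z)^2 + r22*(B*G*x)*(A*G*y) + r02*(A*G*y)*(A*B*z) + r20*(A*B*z)*(B*G*x)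
      = \<sigma>*(qa*x^2 + qb*y^2 + qc*z^2 + qd*x*y + qe*y*z + qf*z*x)" for x y z
  proof -
    have "\<sigma>*(qa*x^2 + qb*y^2 + qc*z^2 + qd*x*y + qe*y*z + qf*z*x) = (\<sigma>*\<tau>) * (r40*(B*G*x)^2 + r04*(A*G*y)^2 + r00*(A*B*z)^2 + r22*(B*G*x)*(A*G*y) + r02*(A*G*y)*(A*B*z) + r20*(A*B*z)*(B*G*x))"
      unfolding qa_def qb_def qc_def qd_def qe_def qf_def by algebra
    then show ?thesis using st1 by simp
  qed
  have Wfac: "(B*G*x)*(A*G*y)*(A*B*z)*(A*(B*G*x) + B*(A*G*y) + G*(A*B*z)) = \<kappa>*(x*y*z*(x+y+z))" for x y z
    unfolding \<kappa>_def by algebra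
  have hq: "qeval c' (B*G*x, A*G*y, A*B*z) = \<kappa> * CQ qa qb qc qd qe qf (x,y,z)" for x y z
  proof -
    have "qeval c' (B*G*x, A*G*y, A*B*z) = (\<sigma>*(qa*x^2 + qb*y^2 + qc*z^2 + qd*x*y + qe*y*z + qf*z*x))^2 + \<kappa>*(x*y*z*(x+y+z))"
      unfolding st'(1) Sfac Wfac ..
    also have "\<dots> = \<kappa>*(qa*x^2 + qb*y^2 + qc*z^2 + qd*x*y + qe*y*z + qf*z*x)^2 + \<kappa>*(x*y*z*(x+y+z))"
      using \<sigma>2 by (simp add: power_mult_distrib)
    also have "\<dots> = \<kappa>*(qa*x^2 + qb*y^2 + qc*z^2 + qd*x*y + qe*y*z + qf*z*x)^2 - \<kappa>*(x*y*z*(x+y+z))"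
      by (simp only: diff_conv_add_uminus c2neg[OF two])
    also have "\<dots> = \<kappa> * CQ qa qb qc qd qe qf (x,y,z)" unfolding CQ_def by (simp add: algebra_simps)
    finally show ?thesis .
  qed
  define dg where "dg = (\<lambda>j::nat. if j = 0 then B*G else if j = 1 then A*G else A*B)"
  have dg: "dg 0 = B*G" "dg 1 = A*G" "dg 2 = A*B" unfolding dg_def by simp_all
  define Mf where "Mf = (\<lambda>i j. M i j * dg j)"
  have linMf: "lin Mf (x,y,z) = lin M (B*G*x, A*G*y, A*B*z)" for x y z
    unfolding lin_def Mf_def dg prod.case by (simp add: algebra_simps)
  have iso: "\<forall>p. qeval c (lin Mf p) = \<kappa> * CQ qa qb qc qd qe qf p"
  proof
    fix p show "qeval c (lin Mf p) = \<kappa> * CQ qa qb qc qd qe qf p"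
      by (rule pt_cases3[of _ p]) (simp only: linMf qc[rule_format] hq)
  qed
  have MfK: "\<forall>i<3. \<forall>j<3. Mf i j \<in> K"
  proof (intro allI impI)
    fix i j :: nat assume "i < 3" "j < 3"
    moreover have "dg j \<in> K" unfolding dg_def using AK by (auto intro!: sf_intros[OF sf])
    ultimately show "Mf i j \<in> K" unfolding Mf_def using MK by (auto intro!: sf_intros[OF sf])
  qed
  have detMf: "det3 Mf = det3 M * ((B*G)*(A*G)*(A*B))"
    unfolding det3_def Mf_def dg by algebra
  have dMf: "det3 Mf \<noteq> 0" unfolding detMf using dM A0 B0 G0 by simp
  have Kiso: "K_iso K c (CQ qa qb qc qd qe qf)"
    unfolding K_iso_def using MfK dMf \<kappa>K \<kappa>0 iso by blast
  note dr = st'(2) st'(3) st'(4)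
  have BG0: "B*G \<noteq> 0" "A*G \<noteq> 0" "A*B \<noteq> 0" using A0 B0 G0 by auto
  have c2a: "x + x = (0::'a)" for x using two by (metis mult_2 mult_zero_left)
  have QQ1: "qa \<noteq> 0"
  proof
    assume h: "qa = 0"
    have "qeval c' (B*G*1, A*G*0, A*B*0) = 0" unfolding hq CQ_def using h by simp
    then show False using ns_point[OF nsc, of "(B*G*1, A*G*0, A*B*0)"] BG0 dr by simp
  qed
  have QQ2: "qb \<noteq> 0"
  proof
    assume h: "qb = 0"
    have "qeval c' (B*G*0, A*G*1, A*B*0) = 0" unfolding hq CQ_def using h by simp
    then show False using ns_point[OF nsc, of "(B*G*0, A*G*1, A*B*0)"] BG0 dr by simp
  qed
  have QQ3: "qc \<noteq> 0"
  proof
    assume h: "qc = 0"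
    have "qeval c' (B*G*0, A*G*0, A*B*1) = 0" unfolding hq CQ_def using h by simp
    then show False using ns_point[OF nsc, of "(B*G*0, A*G*0, A*B*1)"] BG0 dr by simp
  qed
  have QQ4: "qa + qb + qd \<noteq> 0"
  proof
    assume h: "qa + qb + qd = 0"
    have "CQ qa qb qc qd qe qf (1,1,0) = (qa + qb + qd)^2" unfolding CQ_def by simp
    then have "qeval c' (B*G*1, A*G*1, A*B*0) = 0" unfolding hq using h by simp
    moreover have "qdz c' (B*G*1, A*G*1, A*B*0) = 0" unfolding dr
      using c2a[of "A*A*B*B*G*G*G"] by (simp add: power2_eq_square algebra_simps)
    ultimately show False using ns_point[OF nsc, of "(B*G*1, A*G*1, A*B*0)"] BG0 dr by simp
  qed
  have QQ5: "qb + qc + qe \<noteq> 0"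
  proof
    assume h: "qb + qc + qe = 0"
    have "CQ qa qb qc qd qe qf (0,1,1) = (qb + qc + qe)^2" unfolding CQ_def by simp
    then have "qeval c' (B*G*0, A*G*1, A*B*1) = 0" unfolding hq using h by simp
    moreover have "qdx c' (B*G*0, A*G*1, A*B*1) = 0" unfolding dr
      using c2a[of "A*A*A*B*B*G*G"] by (simp add: power2_eq_square algebra_simps)
    ultimately show False using ns_point[OF nsc, of "(B*G*0, A*G*1, A*B*1)"] BG0 dr by simp
  qed
  have QQ6: "qa + qc + qf \<noteq> 0"
  proof
    assume h: "qa + qc + qf = 0"
    have "CQ qa qb qc qd qe qf (1,0,1) = (qa + qc + qf)^2" unfolding CQ_def by (simp add: algebra_simps)
    then have "qeval c' (B*G*1, A*G*0, A*B*1) = 0" unfolding hq using h by simp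
    moreover have "qdy c' (B*G*1, A*G*0, A*B*1) = 0" unfolding dr
      using c2a[of "A*A*B*B*B*G*G"] by (simp add: power2_eq_square algebra_simps)
    ultimately show False using ns_point[OF nsc, of "(B*G*1, A*G*0, A*B*1)"] BG0 dr by simp
  qed
  have QQ7: "qa + qb + qc + qd + qe + qf \<noteq> 1"
  proof
    assume h: "qa + qb + qc + qd + qe + qf = 1"
    have "CQ qa qb qc qd qe qf (1,1,1) = (qa + qb + qc + qd + qe + qf)^2 - 3" unfolding CQ_def by (simp add: algebra_simps)
    also have "\<dots> = 0" using h two by simp
    finally have "qeval c' (B*G*1, A*G*1, A*B*1) = 0" unfolding hq by simp
    moreover have "qdx c' (B*G*1, A*G*1, A*B*1) = 0" unfolding dr
      using c2a[of "A*A*A*B*B*G*G*G"] by (simp add: power2_eq_square algebra_simps)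
    moreover have "qdy c' (B*G*1, A*G*1, A*B*1) = 0" unfolding dr
      using c2a[of "A*A*A*B*B*B*G*G"] by (simp add: power2_eq_square algebra_simps)
    moreover have "qdz c' (B*G*1, A*G*1, A*B*1) = 0" unfolding dr
      using c2a[of "A*A*A*B*B*B*G*G*G"] by (simp add: power2_eq_square algebra_simps)
    ultimately show False using ns_point[OF nsc, of "(B*G*1, A*G*1, A*B*1)"] BG0 by simp
  qed
  have QQ: "in_QQ qa qb qc qd qe qf" unfolding in_QQ_def using QQ1 QQ2 QQ3 QQ4 QQ5 QQ6 QQ7 by simp
  show ?thesis using qK QQ Kiso by blast
qed

lemma cross_zero_scale: fixes a :: "'a::field"
  assumes w1: "(a,b,c) \<noteq> (0,0,0)" and cr: "cross (a,b,c) (d,e,f) = (0,0,0)"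
  shows "\<exists>k. (d,e,f) = pt_scale k (a,b,c)"
proof -
  have h: "b*f = c*e" "c*d = a*f" "a*e = b*d" using cr by (auto simp: cross_def)
  consider "a \<noteq> 0" | "b \<noteq> 0" | "c \<noteq> 0" using w1 by auto
  then show ?thesis
  proof cases
    case 1 then show ?thesis using h by (intro exI[of _ "d/a"]) (auto simp: pt_scale_def field_simps)
  next
    case 2 then show ?thesis using h by (intro exI[of _ "e/b"]) (auto simp: pt_scale_def field_simps)
  next
    case 3 then show ?thesis using h by (intro exI[of _ "f/c"]) (auto simp: pt_scale_def field_simps)
  qed
qed

lemma cross_zero_same: fixes w1 :: "'a::field pt"
  assumes "w1 \<noteq> (0,0,0)" "w2 \<noteq> (0,0,0)" "cross w1 w2 = (0,0,0)"
  shows "line_set w1 = line_set w2"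
proof -
  obtain a b c where w1: "w1 = (a,b,c)" by (cases w1) auto
  obtain d e f where w2: "w2 = (d,e,f)" by (cases w2) auto
  obtain k where k: "w2 = pt_scale k w1" using cross_zero_scale[of a b c d e f] assms w1 w2 by auto
  have "k \<noteq> 0" using k assms(2) by (auto simp: pt_scale_eq0)
  then show ?thesis using k line_set_scale by metis
qed

lemma cmp3_K: "a \<in> K \<Longrightarrow> b \<in> K \<Longrightarrow> d \<in> K \<Longrightarrow> cmp3 (a,b,d) i \<in> K"
  by (simp add: cmp3_def)

theorem lemma1p2:
  fixes K :: "'a::field set" and c :: "nat \<Rightarrow> nat \<Rightarrow> 'a"
  assumes "char2 TYPE('a)" and "alg_closed TYPE('a)"
    and "is_subfield K" and "finite K" and "algebraic_over K"
    and "\<forall>i j. i + j \<le> 4 \<longrightarrow> c i j \<in> K"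
    and "nonsingular_quartic c" and "ordinary_quartic c"
  shows "(\<forall>L\<in>bitangents c. line_over K L) \<longleftrightarrow>
         (\<exists>a b cc d e f. a \<in> K \<and> b \<in> K \<and> cc \<in> K \<and> d \<in> K \<and> e \<in> K \<and> f \<in> K \<and>
            in_QQ a b cc d e f \<and> K_iso K c (CQ a b cc d e f))"
proof -
  have two: "(2::'a) = 0" by (rule two_char2[OF assms(1)])
  note ac = assms(2) and sf = assms(3) and fin = assms(4) and cK = assms(6) and ns = assms(7) and ord = assms(8)
  obtain om :: 'a where om: "om^2 + om + 1 = 0" using om_ex[OF ac] by blast
  show ?thesis
  proof
    assume allK: "\<forall>L\<in>bitangents c. line_over K L"
    have finb: "finite (bitangents c)" and cb: "card (bitangents c) = 7" using ord unfolding ordinary_quartic_def by auto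
    have "bitangents c \<noteq> {}" using cb by (intro notI) simp
    then obtain L1 where L1: "L1 \<in> bitangents c" by blast
    have "card (bitangents c - {L1}) = 6" using cb L1 finb by (simp add: card_Diff_singleton)
    then have "bitangents c - {L1} \<noteq> {}" by (intro notI) simp
    then obtain L2 where L2: "L2 \<in> bitangents c" and L12: "L2 \<noteq> L1" by blast
    have "line_over K L1" using allK L1 by blast
    then obtain a1 b1 d1 where "(a1,b1,d1) \<noteq> (0,0,0) \<and> a1 \<in> K \<and> b1 \<in> K \<and> d1 \<in> K \<and> L1 = line_set (a1,b1,d1)"
      unfolding line_over_def by blast
    then have w1: "(a1,b1,d1) \<noteq> (0,0,0)" "a1 \<in> K" "b1 \<in> K" "d1 \<in> K" "L1 = line_set (a1,b1,d1)" by auto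
    have "line_over K L2" using allK L2 by blast
    then obtain a2 b2 d2 where "(a2,b2,d2) \<noteq> (0,0,0) \<and> a2 \<in> K \<and> b2 \<in> K \<and> d2 \<in> K \<and> L2 = line_set (a2,b2,d2)"
      unfolding line_over_def by blast
    then have w2: "(a2,b2,d2) \<noteq> (0,0,0)" "a2 \<in> K" "b2 \<in> K" "d2 \<in> K" "L2 = line_set (a2,b2,d2)" by auto
    have cr: "cross (a1,b1,d1) (a2,b2,d2) \<noteq> (0,0,0)"
      using cross_zero_same[OF w1(1) w2(1)] w1(5) w2(5) L12 by auto
    obtain L3 where L3: "L3 \<in> bitangents c" and nin: "cross (a1,b1,d1) (a2,b2,d2) \<notin> L3"
      using stepA[OF two om ac ns ord L1[unfolded w1(5)] L2[unfolded w2(5)] cr] by blast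
    have "line_over K L3" using allK L3 by blast
    then obtain a3 b3 d3 where "(a3,b3,d3) \<noteq> (0,0,0) \<and> a3 \<in> K \<and> b3 \<in> K \<and> d3 \<in> K \<and> L3 = line_set (a3,b3,d3)"
      unfolding line_over_def by blast
    then have w3: "(a3,b3,d3) \<noteq> (0,0,0)" "a3 \<in> K" "b3 \<in> K" "d3 \<in> K" "L3 = line_set (a3,b3,d3)" by auto
    have d0: "trip (a1,b1,d1) (a2,b2,d2) (a3,b3,d3) \<noteq> 0"
      using nin w3(5) unfolding trip_cross line_set_dot by simp
    show "\<exists>a b cc d e f. a \<in> K \<and> b \<in> K \<and> cc \<in> K \<and> d \<in> K \<and> e \<in> K \<and> f \<in> K \<and>
            in_QQ a b cc d e f \<and> K_iso K c (CQ a b cc d e f)"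
      by (rule stepB[OF two om ac sf fin cK ns ord L1[unfolded w1(5)] L2[unfolded w2(5)] L3[unfolded w3(5)]
           cmp3_K[OF w1(2-4)] cmp3_K[OF w2(2-4)] cmp3_K[OF w3(2-4)] d0])
  next
    assume "\<exists>a b cc d e f. a \<in> K \<and> b \<in> K \<and> cc \<in> K \<and> d \<in> K \<and> e \<in> K \<and> f \<in> K \<and>
            in_QQ a b cc d e f \<and> K_iso K c (CQ a b cc d e f)"
    then obtain a b cc d e f where "in_QQ a b cc d e f" "K_iso K c (CQ a b cc d e f)" by blast
    then show "\<forall>L\<in>bitangents c. line_over K L" using if_dir[OF two sf fin ord] by blast
  qed
qed

end
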